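(* Fix a realization of the objects described in the context, and let $U$ be the operator defined there. The eigenvalues of $U$ are $0$ and all nonzero integer multiples of $2i\pi/\lambda_k$ for the indices $k$ with $\lambda_k>0$. The eigenspace for the eigenvalue $0$ consists of all functions $f:E\to\mathbb{C}$ such that $x\sim_\sigma y$ implies $f(x)=f(y)$. For $a\in\mathbb{R}\setminus\{0\}$, the eigenspace for the eigenvalue $ai$ consists of all functions $f$ such that $f(x)=0$ whenever $\lambda(x)=0$ or $\lambda(x)$ is not a multiple of $2\pi/a$, and such that for every $x$ with $\lambda(x)$ nonzero and a multiple of $2\pi/a$, the restriction of $f$ to the class of $x$ for $\sim_\sigma$ is proportional to $y\mapsto e^{ai\delta(x,y)}$. Consequently the eigenspace for $0$ has dimension equal to the number of indices $k\ge1$ with $\lambda_k>0$ if $\sum_{k\ge1}\lambda_k=1$, and infinite dimension if $\sum_{k\ge1}\lambda_k<1$; for $a\in\mathbb{R}\setminus\{0\}$ the eigenspace for $ia$ has dimension equal to the number of indices $k\ge1$ such that $\lambda_k$ is a nonzero multiple of $2\pi/a$, in particular it is finite.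
   Context: $E$ is a countable set and $\sigma$ a random virtual permutation of $E$ (a family $(\sigma_I)$ over finite $I\subset E$, $\sigma_I$ a permutation of $I$, with $\sigma_I(x)=\sigma_J^m(x)$, $m\ge1$ minimal with $\sigma_J^m(x)\in I$, for $I\subset J$) with central law (each $\sigma_I$ has conjugation-invariant law). $x\sim_\sigma y$ iff $x,y$ lie in a common cycle of $\sigma_I$ for some (equivalently every) finite $I\ni x,y$; $\mathcal{C}_\sigma(x)$ its class. $\lambda(x)$ is the limit of $|I\cap\mathcal{C}_\sigma(x)|/|I|$ as $|I|\to\infty$; $\lambda_k$ is the supremum of $\min_{j\le k}\lambda(x_j)$ over pairwise non-equivalent $x_1,\dots,x_k$ (non-increasing, $\sum\lambda_k\le1$). For $x\sim_\sigma y$, $\delta(x,y)\in\mathbb{R}/\lambda(x)\mathbb{Z}$ is the class mod $\lambda(x)$ of the limit $\Delta(x,y)$ of $k_I(x,y)/|I|$, where $k_I(x,y)\in\{0,\dots,|I\cap\mathcal{C}_\sigma(x)|-1\}$ satisfies $\sigma_I^{k_I(x,y)}(x)=y$. Metric $d$ on $E$: $d(x,y)=1$ if $x\not\sim_\sigma y$, else $\inf\{|a|:a\equiv\delta(x,y)\bmod\lambda(x)\}$; $(\widehat E,\widehat d)$ its completion. Almost surely: these are well defined; $\lambda(x)>0$ iff $x$ is not a fixed point of $\sigma$; $\lambda,\sim_\sigma,\delta$ extend uniquely and continuously to $\widehat\lambda,\widehat\sim_\sigma,\widehat\delta$ on $\widehat E$; each class of $\widehat\sim_\sigma$ containing a non-fixed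 point is isometric to a circle of perimeter $\lambda_k$ for some $k$, each $k$ with $\lambda_k>0$ occurring exactly once, and the remaining points are singleton classes with $\widehat\lambda=0$ (countably infinitely many if $\sum\lambda_k<1$, none otherwise); there is a unique family $(S^\alpha)_{\alpha\in\mathbb{R}}$ of bijective isometries of $\widehat E$ with $S^\alpha(x)\,\widehat\sim_\sigma\,x$, $\widehat\delta(x,S^\alpha(x))=\alpha$ mod $\widehat\lambda(x)$ when $\widehat\lambda(x)>0$, $S^\alpha(x)=x$ when $\widehat\lambda(x)=0$, and $S^{\alpha+\beta}=S^\alpha S^\beta$. Fix a realization on this event. A function $f:E\to\mathbb{C}$ is continuous if it extends continuously (uniquely) to $\widehat f:\widehat E\to\mathbb{C}$; $T^\alpha f$ is the restriction to $E$ of $\widehat f\circ S^\alpha$. A continuous $f$ is continuously differentiable if there is a (necessarily unique) continuous $Uf:E\to\mathbb{C}$ with $(\widehat{T^\alpha f}(x)-\widehat f(x))/\alpha\to\widehat{Uf}(x)$ as $\alpha\to0$ for every $x\in\widehat E$; $U$ is a linear operator on this space. An eigenvalue of $U$ is $b\in\mathbb{C}$ such that $Uf=bf$ for some nonzero continuously differentiable $f$; the eigenspace is the set of such $f$ (with $0$). *)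

theory Defs
  imports "HOL-Analysis.Analysis" "HOL-Combinatorics.Permutations"
begin

definition virtual_perm :: "'a set \<Rightarrow> ('a set \<Rightarrow> 'a \<Rightarrow> 'a) \<Rightarrow> bool" where
  "virtual_perm E \<sigma> \<longleftrightarrow>
     (\<forall>I. finite I \<and> I \<subseteq> E \<longrightarrow> \<sigma> I permutes I) \<and>
     (\<forall>I J x. finite J \<and> J \<subseteq> E \<and> I \<subseteq> J \<and> x \<in> I \<longrightarrow>
        \<sigma> I x = (\<sigma> J ^^ (LEAST m. m \<ge> 1 \<and> (\<sigma> J ^^ m) x \<in> I)) x)"

definition vsim :: "'a set \<Rightarrow> ('a set \<Rightarrow> 'a \<Rightarrow> 'a) \<Rightarrow> 'a \<Rightarrow> 'a \<Rightarrow> bool" where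
  "vsim E \<sigma> x y \<longleftrightarrow> x \<in> E \<and> y \<in> E \<and>
     (\<exists>I n. finite I \<and> I \<subseteq> E \<and> x \<in> I \<and> y \<in> I \<and> (\<sigma> I ^^ n) x = y)"

definition vcls :: "'a set \<Rightarrow> ('a set \<Rightarrow> 'a \<Rightarrow> 'a) \<Rightarrow> 'a \<Rightarrow> 'a set" where
  "vcls E \<sigma> x = {y. vsim E \<sigma> x y}"

definition vfixed :: "'a set \<Rightarrow> ('a set \<Rightarrow> 'a \<Rightarrow> 'a) \<Rightarrow> 'a \<Rightarrow> bool" where
  "vfixed E \<sigma> x \<longleftrightarrow> x \<in> E \<and> (\<forall>I. finite I \<and> I \<subseteq> E \<and> x \<in> I \<longrightarrow> \<sigma> I x = x)"

text \<open>The finite sets I along which |I| tends to infinity: the first n elements of a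
fixed enumeration of E.\<close>
definition Iset :: "(nat \<Rightarrow> 'a) \<Rightarrow> nat \<Rightarrow> 'a set" where
  "Iset enum n = enum ` {..<n}"

definition lam_seq :: "'a set \<Rightarrow> (nat \<Rightarrow> 'a) \<Rightarrow> ('a set \<Rightarrow> 'a \<Rightarrow> 'a) \<Rightarrow> 'a \<Rightarrow> nat \<Rightarrow> real" where
  "lam_seq E enum \<sigma> x n =
     real (card (Iset enum n \<inter> vcls E \<sigma> x)) / real (card (Iset enum n))"

definition lam :: "'a set \<Rightarrow> (nat \<Rightarrow> 'a) \<Rightarrow> ('a set \<Rightarrow> 'a \<Rightarrow> 'a) \<Rightarrow> 'a \<Rightarrow> real" where
  "lam E enum \<sigma> x = lim (lam_seq E enum \<sigma> x)"

definition kI :: "('a set \<Rightarrow> 'a \<Rightarrow> 'a) \<Rightarrow> 'a set \<Rightarrow> 'a \<Rightarrow> 'a \<Rightarrow> nat" where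
  "kI \<sigma> I x y = (LEAST k. (\<sigma> I ^^ k) x = y)"

definition Delta_seq :: "(nat \<Rightarrow> 'a) \<Rightarrow> ('a set \<Rightarrow> 'a \<Rightarrow> 'a) \<Rightarrow> 'a \<Rightarrow> 'a \<Rightarrow> nat \<Rightarrow> real" where
  "Delta_seq enum \<sigma> x y n = real (kI \<sigma> (Iset enum n) x y) / real (card (Iset enum n))"

text \<open>Delta(x,y); delta(x,y) is its class modulo lambda(x).\<close>
definition Delta :: "(nat \<Rightarrow> 'a) \<Rightarrow> ('a set \<Rightarrow> 'a \<Rightarrow> 'a) \<Rightarrow> 'a \<Rightarrow> 'a \<Rightarrow> real" where
  "Delta enum \<sigma> x y = lim (Delta_seq enum \<sigma> x y)"

definition circdist :: "real \<Rightarrow> real \<Rightarrow> real" where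
  "circdist L t = Inf {\<bar>a\<bar> | a. \<exists>m::int. a = t + of_int m * L}"

definition vdist :: "'a set \<Rightarrow> (nat \<Rightarrow> 'a) \<Rightarrow> ('a set \<Rightarrow> 'a \<Rightarrow> 'a) \<Rightarrow> 'a \<Rightarrow> 'a \<Rightarrow> real" where
  "vdist E enum \<sigma> x y =
     (if vsim E \<sigma> x y then circdist (lam E enum \<sigma> x) (Delta enum \<sigma> x y) else 1)"

text \<open>lambda_k (k \<ge> 1): supremum of min lambda over k pairwise non-equivalent points
(0 is added to the set so that the supremum of an empty family is 0).\<close>
definition lamk :: "'a set \<Rightarrow> (nat \<Rightarrow> 'a) \<Rightarrow> ('a set \<Rightarrow> 'a \<Rightarrow> 'a) \<Rightarrow> nat \<Rightarrow> real" where
  "lamk E enum \<sigma> k = Sup ({0} \<union>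
     {Min (lam E enum \<sigma> ` set xs) | xs. length xs = k \<and> set xs \<subseteq> E \<and>
        (\<forall>i<k. \<forall>j<k. i \<noteq> j \<longrightarrow> \<not> vsim E \<sigma> (xs ! i) (xs ! j))})"

definition is_completion :: "'a set \<Rightarrow> ('a \<Rightarrow> 'a \<Rightarrow> real) \<Rightarrow> 'a set \<Rightarrow> ('a \<Rightarrow> 'a \<Rightarrow> real) \<Rightarrow> bool" where
  "is_completion E d Ehat dhat \<longleftrightarrow>
     Metric_space Ehat dhat \<and> Metric_space.mcomplete Ehat dhat \<and> E \<subseteq> Ehat \<and>
     (\<forall>x\<in>E. \<forall>y\<in>E. dhat x y = d x y) \<and>
     (\<forall>x\<in>Ehat. \<forall>e>0. \<exists>y\<in>E. dhat x y < e)"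

definition seqs_to :: "'a set \<Rightarrow> ('a \<Rightarrow> 'a \<Rightarrow> real) \<Rightarrow> 'a \<Rightarrow> (nat \<Rightarrow> 'a) set" where
  "seqs_to E dhat x = {xs. (\<forall>n. xs n \<in> E) \<and> (\<lambda>n. dhat (xs n) x) \<longlonglongrightarrow> 0}"

context
  fixes E :: "'a set" and enum :: "nat \<Rightarrow> 'a" and \<sigma> :: "'a set \<Rightarrow> 'a \<Rightarrow> 'a"
    and Ehat :: "'a set" and dhat :: "'a \<Rightarrow> 'a \<Rightarrow> real"
begin

definition lamhat :: "'a \<Rightarrow> real" where
  "lamhat x = lim (\<lambda>n. lam E enum \<sigma> ((SOME xs. xs \<in> seqs_to E dhat x) n))"

definition simhat :: "'a \<Rightarrow> 'a \<Rightarrow> bool" where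
  "simhat x y \<longleftrightarrow> (\<forall>xs\<in>seqs_to E dhat x. \<forall>ys\<in>seqs_to E dhat y.
      eventually (\<lambda>n. vsim E \<sigma> (xs n) (ys n)) sequentially)"

text \<open>A representative of deltahat(x,y) (a class modulo lamhat x).\<close>
definition Deltahat :: "'a \<Rightarrow> 'a \<Rightarrow> real" where
  "Deltahat x y = (SOME D. \<forall>xs\<in>seqs_to E dhat x. \<forall>ys\<in>seqs_to E dhat y.
      (\<lambda>n. circdist (lam E enum \<sigma> (xs n)) (Delta enum \<sigma> (xs n) (ys n) - D)) \<longlonglongrightarrow> 0)"

text \<open>The almost sure facts that lambda, sim and delta extend continuously.\<close>
definition extensions_exist :: bool where
  "extensions_exist \<longleftrightarrow>
     (\<forall>x\<in>Ehat. \<exists>L. \<forall>xs\<in>seqs_to E dhat x. (\<lambda>n. lam E enum \<sigma> (xs n)) \<longlonglongrightarrow> L) \<and>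
     (\<forall>x\<in>Ehat. \<forall>y\<in>Ehat.
        (\<forall>xs\<in>seqs_to E dhat x. \<forall>ys\<in>seqs_to E dhat y.
            eventually (\<lambda>n. vsim E \<sigma> (xs n) (ys n)) sequentially) \<or>
        (\<forall>xs\<in>seqs_to E dhat x. \<forall>ys\<in>seqs_to E dhat y.
            eventually (\<lambda>n. \<not> vsim E \<sigma> (xs n) (ys n)) sequentially)) \<and>
     (\<forall>x\<in>Ehat. \<forall>y\<in>Ehat. simhat x y \<and> lamhat x > 0 \<longrightarrow>
        (\<exists>D. \<forall>xs\<in>seqs_to E dhat x. \<forall>ys\<in>seqs_to E dhat y.
          (\<lambda>n. circdist (lam E enum \<sigma> (xs n)) (Delta enum \<sigma> (xs n) (ys n) - D)) \<longlonglongrightarrow> 0))"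

definition hatcls :: "'a \<Rightarrow> 'a set" where
  "hatcls x = {y \<in> Ehat. simhat x y}"

definition isometric_circle :: "'a set \<Rightarrow> real \<Rightarrow> bool" where
  "isometric_circle C L \<longleftrightarrow> (\<exists>\<phi>. bij_betw \<phi> C {0..<L} \<and>
      (\<forall>x\<in>C. \<forall>y\<in>C. dhat x y = circdist L (\<phi> x - \<phi> y)))"

text \<open>The almost sure description of the classes of the completion.\<close>
definition class_structure :: bool where
  "class_structure \<longleftrightarrow>
     (let K = {k. k \<ge> 1 \<and> lamk E enum \<sigma> k > 0} in
      (\<exists>c. (\<forall>k\<in>K. c k \<in> Ehat \<and> lamhat (c k) = lamk E enum \<sigma> k \<and>
                    isometric_circle (hatcls (c k)) (lamk E enum \<sigma> k)) \<and>
           inj_on (\<lambda>k. hatcls (c k)) K \<and>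
           (\<forall>x\<in>Ehat. lamhat x > 0 \<longrightarrow> (\<exists>k\<in>K. x \<in> hatcls (c k))))) \<and>
     (\<forall>x\<in>Ehat. lamhat x \<ge> 0) \<and>
     (\<forall>x\<in>Ehat. lamhat x = 0 \<longrightarrow> hatcls x = {x}) \<and>
     ((\<exists>s<1. (\<lambda>k. lamk E enum \<sigma> (Suc k)) sums s) \<longrightarrow>
        countable {x\<in>Ehat. lamhat x = 0} \<and> infinite {x\<in>Ehat. lamhat x = 0}) \<and>
     ((\<lambda>k. lamk E enum \<sigma> (Suc k)) sums 1 \<longrightarrow> {x\<in>Ehat. lamhat x = 0} = {})"

definition is_flow :: "(real \<Rightarrow> 'a \<Rightarrow> 'a) \<Rightarrow> bool" where
  "is_flow S \<longleftrightarrow>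
     (\<forall>\<alpha>. bij_betw (S \<alpha>) Ehat Ehat \<and>
          (\<forall>x\<in>Ehat. \<forall>y\<in>Ehat. dhat (S \<alpha> x) (S \<alpha> y) = dhat x y)) \<and>
     (\<forall>\<alpha> \<beta>. \<forall>x\<in>Ehat. S (\<alpha> + \<beta>) x = S \<alpha> (S \<beta> x)) \<and>
     (\<forall>\<alpha>. \<forall>x\<in>Ehat.
        (lamhat x = 0 \<longrightarrow> S \<alpha> x = x) \<and>
        (lamhat x > 0 \<longrightarrow> simhat x (S \<alpha> x) \<and>
            circdist (lamhat x) (Deltahat x (S \<alpha> x) - \<alpha>) = 0))"

definition contin_hat :: "('a \<Rightarrow> complex) \<Rightarrow> bool" where
  "contin_hat g \<longleftrightarrow> (\<forall>x\<in>Ehat. \<forall>e>0. \<exists>\<delta>>0. \<forall>y\<in>Ehat.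
      dhat x y < \<delta> \<longrightarrow> cmod (g y - g x) < e)"

definition is_ext :: "('a \<Rightarrow> complex) \<Rightarrow> ('a \<Rightarrow> complex) \<Rightarrow> bool" where
  "is_ext f g \<longleftrightarrow> contin_hat g \<and> (\<forall>x\<in>E. g x = f x)"

definition vcont :: "('a \<Rightarrow> complex) \<Rightarrow> bool" where
  "vcont f \<longleftrightarrow> (\<exists>g. is_ext f g)"

definition fhat :: "('a \<Rightarrow> complex) \<Rightarrow> 'a \<Rightarrow> complex" where
  "fhat f = (SOME g. is_ext f g)"

text \<open>Functions E to C, represented as functions vanishing outside E.\<close>
definition FE :: "('a \<Rightarrow> complex) set" where
  "FE = {f. \<forall>x. x \<notin> E \<longrightarrow> f x = 0}"

definition Tflow :: "(real \<Rightarrow> 'a \<Rightarrow> 'a) \<Rightarrow> real \<Rightarrow> ('a \<Rightarrow> complex) \<Rightarrow> 'a \<Rightarrow> complex" where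
  "Tflow S \<alpha> f = (\<lambda>x. if x \<in> E then fhat f (S \<alpha> x) else 0)"

text \<open>has_U S f u: f is continuously differentiable with U f = u (on E).\<close>
definition has_U :: "(real \<Rightarrow> 'a \<Rightarrow> 'a) \<Rightarrow> ('a \<Rightarrow> complex) \<Rightarrow> ('a \<Rightarrow> complex) \<Rightarrow> bool" where
  "has_U S f u \<longleftrightarrow> vcont f \<and> vcont u \<and>
     (\<forall>x\<in>Ehat. ((\<lambda>\<alpha>. (fhat (Tflow S \<alpha> f) x - fhat f x) / complex_of_real \<alpha>)
                  \<longlongrightarrow> fhat u x) (at 0))"

definition eigenspace :: "(real \<Rightarrow> 'a \<Rightarrow> 'a) \<Rightarrow> complex \<Rightarrow> ('a \<Rightarrow> complex) set" where
  "eigenspace S b = {f \<in> FE. \<exists>u. has_U S f u \<and> (\<forall>x\<in>E. u x = b * f x)}"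

definition is_eigenvalue :: "(real \<Rightarrow> 'a \<Rightarrow> 'a) \<Rightarrow> complex \<Rightarrow> bool" where
  "is_eigenvalue S b \<longleftrightarrow> (\<exists>f\<in>eigenspace S b. \<exists>x\<in>E. f x \<noteq> 0)"

end

definition lin_indep :: "('a \<Rightarrow> complex) set \<Rightarrow> bool" where
  "lin_indep B \<longleftrightarrow> finite B \<and>
     (\<forall>c. (\<forall>x. (\<Sum>b\<in>B. c b * b x) = 0) \<longrightarrow> (\<forall>b\<in>B. c b = 0))"

definition lin_span :: "('a \<Rightarrow> complex) set \<Rightarrow> ('a \<Rightarrow> complex) set" where
  "lin_span B = {f. \<exists>c. f = (\<lambda>x. \<Sum>b\<in>B. c b * b x)}"

definition has_dim :: "('a \<Rightarrow> complex) set \<Rightarrow> nat \<Rightarrow> bool" where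
  "has_dim V n \<longleftrightarrow> (\<exists>B\<subseteq>V. lin_indep B \<and> card B = n \<and> lin_span B = V)"

definition infinite_dim :: "('a \<Rightarrow> complex) set \<Rightarrow> bool" where
  "infinite_dim V \<longleftrightarrow> (\<forall>n. \<exists>B\<subseteq>V. lin_indep B \<and> card B = n)"

definition dim_eq_card :: "('a \<Rightarrow> complex) set \<Rightarrow> 'b set \<Rightarrow> bool" where
  "dim_eq_card V K \<longleftrightarrow> (finite K \<longrightarrow> has_dim V (card K)) \<and> (infinite K \<longrightarrow> infinite_dim V)"

end

theory Submission
  imports Defs
begin


lemma funpow_period_mult:
  assumes "(p ^^ N) x = x" shows "(p ^^ (N * k)) x = x"
proof (induction k)
  case (Suc k)
  have "(p ^^ (N * Suc k)) x = (p ^^ N) ((p ^^ (N * k)) x)" by (simp add: funpow_add)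
  then show ?case using Suc assms by simp
qed simp

lemma funpow_mod_period:
  assumes "(p ^^ N) x = x" shows "(p ^^ k) x = (p ^^ (k mod N)) x"
proof -
  have "(p ^^ k) x = (p ^^ (k mod N + N * (k div N))) x" by simp
  then have "(p ^^ k) x = (p ^^ (k mod N)) ((p ^^ (N * (k div N))) x)"
    by (simp only: funpow_add o_apply)
  then show ?thesis using funpow_period_mult[OF assms] by simp
qed

lemma perm_orbit:
  assumes p: "p permutes J" and J: "finite J" and x: "x \<in> J"
  defines "Orb \<equiv> range (\<lambda>k. (p ^^ k) x)"
  shows "finite Orb" "card Orb > 0" "(p ^^ card Orb) x = x"
    "\<And>i j. (p ^^ i) x = (p ^^ j) x \<longleftrightarrow> i mod card Orb = j mod card Orb"
    "\<And>y. y \<in> Orb \<Longrightarrow> (p ^^ (LEAST k. (p ^^ k) x = y)) x = y \<and> (LEAST k. (p ^^ k) x = y) < card Orb"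
proof -
  have inj: "inj (p ^^ n)" for n using permutes_inj[OF p] by (rule inj_fn)
  have inJ: "(p ^^ k) x \<in> J" for k
    by (induction k) (auto simp: x permutes_in_image[OF p])
  have OrbJ: "Orb \<subseteq> J" using inJ unfolding Orb_def by auto
  show fOrb: "finite Orb" using OrbJ J finite_subset by blast
  have nin: "\<not> inj_on (\<lambda>k. (p ^^ k) x) {..card J}"
  proof
    assume "inj_on (\<lambda>k. (p ^^ k) x) {..card J}"
    then have c1: "card ((\<lambda>k. (p ^^ k) x) ` {..card J}) = Suc (card J)"
      by (simp add: card_image)
    have "(\<lambda>k. (p ^^ k) x) ` {..card J} \<subseteq> J" using inJ by auto
    from card_mono[OF J this] c1 show False by simp
  qed
  obtain a b where ab: "a \<noteq> b" "(p ^^ a) x = (p ^^ b) x"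
    using nin unfolding inj_on_def by blast
  obtain i j where ij: "i < j" "(p ^^ i) x = (p ^^ j) x"
  proof (cases "a < b")
    case True then show ?thesis using that ab by blast
  next
    case False then have "b < a" using ab by simp
    then show ?thesis using that ab by metis
  qed
  have shift: "(p ^^ u) ((p ^^ (v - u)) x) = (p ^^ v) x" if "u \<le> v" for u v
  proof -
    have "(p ^^ u) ((p ^^ (v - u)) x) = (p ^^ (u + (v - u))) x" by (simp add: funpow_add)
    then show ?thesis using that by simp
  qed
  have "(p ^^ i) ((p ^^ (j - i)) x) = (p ^^ i) x"
    using ij shift[of i j] by simp
  then have per_ex: "(p ^^ (j - i)) x = x" using inj[of i] by (simp add: inj_eq)
  define P where "P = (LEAST n. n > 0 \<and> (p ^^ n) x = x)"
  have P: "P > 0" "(p ^^ P) x = x"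
    using LeastI[of "\<lambda>n. n > 0 \<and> (p ^^ n) x = x" "j - i"] per_ex ij unfolding P_def by auto
  have Pmin: "\<And>n. 0 < n \<Longrightarrow> n < P \<Longrightarrow> (p ^^ n) x \<noteq> x"
    unfolding P_def using not_less_Least by blast
  have eqiff: "(p ^^ a) x = (p ^^ b) x \<longleftrightarrow> a mod P = b mod P" for a b
  proof
    assume "a mod P = b mod P" then show "(p ^^ a) x = (p ^^ b) x"
      using funpow_mod_period[OF P(2), of a] funpow_mod_period[OF P(2), of b] by simp
  next
    assume h: "(p ^^ a) x = (p ^^ b) x"
    have h2: "(p ^^ (a mod P)) x = (p ^^ (b mod P)) x"
      using h funpow_mod_period[OF P(2), of a] funpow_mod_period[OF P(2), of b] by simp
    show "a mod P = b mod P"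
    proof (rule ccontr)
      assume ne: "a mod P \<noteq> b mod P"
      have gen: "u < v \<Longrightarrow> v < P \<Longrightarrow> (p ^^ u) x = (p ^^ v) x \<Longrightarrow> False" for u v
      proof -
        assume uv: "u < v" "v < P" "(p ^^ u) x = (p ^^ v) x"
        have "(p ^^ u) ((p ^^ (v - u)) x) = (p ^^ u) x"
          using uv shift[of u v] by simp
        then have "(p ^^ (v - u)) x = x" using inj[of u] by (simp add: inj_eq)
        then show False using Pmin[of "v - u"] uv by auto
      qed
      have "a mod P < P" "b mod P < P" using P(1) by auto
      then show False using ne h2 gen[of "a mod P" "b mod P"] gen[of "b mod P" "a mod P"]
        by (cases "a mod P < b mod P") auto
    qed
  qed
  have Oeq: "Orb = (\<lambda>k. (p ^^ k) x) ` {..<P}"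
  proof
    show "Orb \<subseteq> (\<lambda>k. (p ^^ k) x) ` {..<P}"
    proof
      fix y assume "y \<in> Orb"
      then obtain k where k: "y = (p ^^ k) x" unfolding Orb_def by auto
      have "k mod P \<in> {..<P}" using P(1) by simp
      then show "y \<in> (\<lambda>k. (p ^^ k) x) ` {..<P}"
        using k funpow_mod_period[OF P(2), of k] by (intro rev_image_eqI) auto
    qed
  qed (auto simp: Orb_def)
  have "inj_on (\<lambda>k. (p ^^ k) x) {..<P}"
    unfolding inj_on_def using eqiff by auto
  then have cP: "card Orb = P" unfolding Oeq by (simp add: card_image)
  show "card Orb > 0" "(p ^^ card Orb) x = x" using P cP by auto
  show "\<And>i j. (p ^^ i) x = (p ^^ j) x \<longleftrightarrow> i mod card Orb = j mod card Orb" using eqiff cP by auto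
  fix y assume "y \<in> Orb"
  then obtain k where k: "k < P" "(p ^^ k) x = y" unfolding Oeq by auto
  show "(p ^^ (LEAST k. (p ^^ k) x = y)) x = y \<and> (LEAST k. (p ^^ k) x = y) < card Orb"
    using LeastI[of "\<lambda>k. (p ^^ k) x = y" k] Least_le[of "\<lambda>k. (p ^^ k) x = y" k] k cP by auto
qed

lemma first_return_orbit:
  assumes p: "p permutes K" and K: "finite K" and IK: "I \<subseteq> K"
    and r: "\<And>z. z \<in> I \<Longrightarrow> r z = (p ^^ (LEAST m. m \<ge> 1 \<and> (p ^^ m) z \<in> I)) z"
  shows "x \<in> I \<Longrightarrow> (p ^^ m) x \<in> I \<Longrightarrow> \<exists>j. (r ^^ j) x = (p ^^ m) x"
proof (induction m arbitrary: x rule: less_induct)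
  case (less m)
  show ?case
  proof (cases "m = 0")
    case True then show ?thesis by (intro exI[of _ 0]) simp
  next
    case False
    define m1 where "m1 = (LEAST m. m \<ge> 1 \<and> (p ^^ m) x \<in> I)"
    have m1: "m1 \<ge> 1" "(p ^^ m1) x \<in> I" "m1 \<le> m"
      using LeastI[of "\<lambda>m. m \<ge> 1 \<and> (p ^^ m) x \<in> I" m] Least_le[of "\<lambda>m. m \<ge> 1 \<and> (p ^^ m) x \<in> I" m]
        False less.prems unfolding m1_def by auto
    have rx: "r x = (p ^^ m1) x" using r[OF less.prems(1)] m1_def by simp
    have "(p ^^ m) x = (p ^^ ((m - m1) + m1)) x" using m1 by simp
    then have eq: "(p ^^ m) x = (p ^^ (m - m1)) (r x)"
      using rx by (simp only: funpow_add o_apply)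
    have "\<exists>j. (r ^^ j) (r x) = (p ^^ (m - m1)) (r x)"
      using less.IH[of "m - m1" "r x"] m1 rx eq less.prems by auto
    then obtain j where "(r ^^ j) (r x) = (p ^^ m) x" using eq by auto
    then show ?thesis by (intro exI[of _ "Suc j"]) (simp only: funpow_Suc_right o_apply)
  qed
qed

context
  fixes E :: "'a set" and \<sigma> :: "'a set \<Rightarrow> 'a \<Rightarrow> 'a"
  assumes vp: "virtual_perm E \<sigma>"
begin

lemma vp_permutes: "finite I \<Longrightarrow> I \<subseteq> E \<Longrightarrow> \<sigma> I permutes I"
  using vp unfolding virtual_perm_def by blast

lemma vp_restrict: "finite J \<Longrightarrow> J \<subseteq> E \<Longrightarrow> I \<subseteq> J \<Longrightarrow> x \<in> I \<Longrightarrow>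
   \<sigma> I x = (\<sigma> J ^^ (LEAST m. m \<ge> 1 \<and> (\<sigma> J ^^ m) x \<in> I)) x"
  using vp unfolding virtual_perm_def by blast

lemma vp_in: "finite I \<Longrightarrow> I \<subseteq> E \<Longrightarrow> x \<in> I \<Longrightarrow> (\<sigma> I ^^ k) x \<in> I"
  by (induction k) (auto simp: permutes_in_image[OF vp_permutes])

lemma vp_up:
  assumes J: "finite J" "J \<subseteq> E" "I \<subseteq> J" and x: "x \<in> I"
  shows "\<exists>m. (\<sigma> I ^^ n) x = (\<sigma> J ^^ m) x"
proof (induction n)
  case 0 show ?case by (intro exI[of _ 0]) simp
next
  case (Suc n)
  then obtain m where m: "(\<sigma> I ^^ n) x = (\<sigma> J ^^ m) x" by blast
  have I: "finite I" "I \<subseteq> E" using J finite_subset by auto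
  have zI: "(\<sigma> I ^^ n) x \<in> I" using vp_in[OF I x] .
  define l where "l = (LEAST m. m \<ge> 1 \<and> (\<sigma> J ^^ m) ((\<sigma> I ^^ n) x) \<in> I)"
  have "(\<sigma> I ^^ Suc n) x = (\<sigma> J ^^ l) ((\<sigma> J ^^ m) x)"
    using vp_restrict[OF J zI] m unfolding l_def by simp
  then show ?case by (intro exI[of _ "l + m"]) (simp add: funpow_add)
qed

lemma vp_down:
  assumes K: "finite K" "K \<subseteq> E" "I \<subseteq> K" and x: "x \<in> I" and y: "y \<in> I"
    and m: "(\<sigma> K ^^ m) x = y"
  shows "\<exists>j. (\<sigma> I ^^ j) x = y"
  using first_return_orbit[OF vp_permutes[OF K(1,2)] K(1) K(3), of "\<sigma> I" x m]
    vp_restrict[OF K] x y m by auto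

lemma vsim_orbit:
  assumes I: "finite I" "I \<subseteq> E" and x: "x \<in> I"
  shows "{y \<in> I. vsim E \<sigma> x y} = range (\<lambda>k. (\<sigma> I ^^ k) x)"
proof
  show "range (\<lambda>k. (\<sigma> I ^^ k) x) \<subseteq> {y \<in> I. vsim E \<sigma> x y}"
  proof
    fix y assume "y \<in> range (\<lambda>k. (\<sigma> I ^^ k) x)"
    then obtain k where k: "y = (\<sigma> I ^^ k) x" by auto
    have yI: "y \<in> I" using vp_in[OF I x] k by simp
    have "x \<in> E" "y \<in> E" using I x yI by auto
    then have "vsim E \<sigma> x y" unfolding vsim_def
      using I(1,2) x yI k[symmetric] by blast
    then show "y \<in> {y \<in> I. vsim E \<sigma> x y}" using yI by simp
  qed
next
  show "{y \<in> I. vsim E \<sigma> x y} \<subseteq> range (\<lambda>k. (\<sigma> I ^^ k) x)"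
  proof clarify
    fix y assume y: "y \<in> I" "vsim E \<sigma> x y"
    then obtain J n where J: "finite J" "J \<subseteq> E" "x \<in> J" "y \<in> J" "(\<sigma> J ^^ n) x = y"
      unfolding vsim_def by blast
    have K: "finite (I \<union> J)" "I \<union> J \<subseteq> E" using I J by auto
    have JK: "J \<subseteq> I \<union> J" "I \<subseteq> I \<union> J" by auto
    obtain m where m: "(\<sigma> J ^^ n) x = (\<sigma> (I \<union> J) ^^ m) x"
      using vp_up[OF K JK(1) J(3)] by blast
    have "(\<sigma> (I \<union> J) ^^ m) x = y" using m J(5) by simp
    then obtain j where "(\<sigma> I ^^ j) x = y" using vp_down[OF K JK(2) x y(1)] by blast
    then show "y \<in> range (\<lambda>k. (\<sigma> I ^^ k) x)" by auto
  qed
qed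

lemma vsim_refl: assumes "x \<in> E" shows "vsim E \<sigma> x x"
proof -
  have "finite {x} \<and> {x} \<subseteq> E \<and> x \<in> {x} \<and> x \<in> {x} \<and> (\<sigma> {x} ^^ 0) x = x" using assms by simp
  then show ?thesis unfolding vsim_def using assms by blast
qed

lemma vsim_E: "vsim E \<sigma> x y \<Longrightarrow> x \<in> E \<and> y \<in> E"
  unfolding vsim_def by auto

lemma vsim_any:
  assumes "vsim E \<sigma> x y" "finite I" "I \<subseteq> E" "x \<in> I" "y \<in> I"
  shows "\<exists>k. (\<sigma> I ^^ k) x = y"
proof -
  have "y \<in> {y \<in> I. vsim E \<sigma> x y}" using assms by simp
  then have "y \<in> range (\<lambda>k. (\<sigma> I ^^ k) x)" using vsim_orbit[OF assms(2,3,4)] by simp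
  then show ?thesis by auto
qed

lemma vsim_sym:
  assumes "vsim E \<sigma> x y" shows "vsim E \<sigma> y x"
proof -
  obtain I n where I: "finite I" "I \<subseteq> E" "x \<in> I" "y \<in> I" "(\<sigma> I ^^ n) x = y"
    using assms unfolding vsim_def by blast
  note po = perm_orbit[OF vp_permutes[OF I(1,2)] I(1) I(3)]
  define N where "N = card (range (\<lambda>k. (\<sigma> I ^^ k) x))"
  have Nn: "N * n - n + n = N * n" using po(2) unfolding N_def[symmetric]
    by (simp add: le_add_diff_inverse2)
  have "(\<sigma> I ^^ (N * n - n)) y = (\<sigma> I ^^ (N * n - n + n)) x"
    using I(5) by (simp add: funpow_add)
  also have "\<dots> = (\<sigma> I ^^ (N * n)) x" using Nn by simp
  also have "\<dots> = x" using funpow_period_mult[OF po(3)] N_def by simp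
  finally show ?thesis using I assms unfolding vsim_def by blast
qed

lemma vsim_trans:
  assumes "vsim E \<sigma> x y" "vsim E \<sigma> y z" shows "vsim E \<sigma> x z"
proof -
  obtain I1 where I1: "finite I1" "I1 \<subseteq> E" "x \<in> I1" "y \<in> I1"
    using assms(1) unfolding vsim_def by blast
  obtain I2 where I2: "finite I2" "I2 \<subseteq> E" "y \<in> I2" "z \<in> I2"
    using assms(2) unfolding vsim_def by blast
  have K: "finite (I1 \<union> I2)" "I1 \<union> I2 \<subseteq> E" using I1 I2 by auto
  obtain k where k: "(\<sigma> (I1 \<union> I2) ^^ k) x = y" using vsim_any[OF assms(1) K] I1 by auto
  obtain l where l: "(\<sigma> (I1 \<union> I2) ^^ l) y = z" using vsim_any[OF assms(2) K] I2 by auto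
  have "(\<sigma> (I1 \<union> I2) ^^ (l + k)) x = z" using k l by (simp add: funpow_add)
  then show ?thesis using K I1 I2 assms unfolding vsim_def by blast
qed

lemma vcls_eq: "vsim E \<sigma> x y \<Longrightarrow> vcls E \<sigma> x = vcls E \<sigma> y"
  unfolding vcls_def using vsim_sym vsim_trans by blast

lemma kI_props:
  assumes I: "finite I" "I \<subseteq> E" and x: "x \<in> I" and y: "y \<in> I" and xy: "vsim E \<sigma> x y"
  shows "(\<sigma> I ^^ kI \<sigma> I x y) x = y" "kI \<sigma> I x y < card (I \<inter> vcls E \<sigma> x)"
    "card (I \<inter> vcls E \<sigma> x) > 0"
proof -
  have eq: "I \<inter> vcls E \<sigma> x = range (\<lambda>k. (\<sigma> I ^^ k) x)"
    using vsim_orbit[OF I x] unfolding vcls_def by auto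
  note po = perm_orbit[OF vp_permutes[OF I] I(1) x]
  have yO: "y \<in> range (\<lambda>k. (\<sigma> I ^^ k) x)" using eq y xy unfolding vcls_def by auto
  show "(\<sigma> I ^^ kI \<sigma> I x y) x = y" "kI \<sigma> I x y < card (I \<inter> vcls E \<sigma> x)"
    using po(5)[OF yO] eq unfolding kI_def by auto
  show "card (I \<inter> vcls E \<sigma> x) > 0" using po(2) eq by simp
qed

lemma kI_cocycle:
  assumes I: "finite I" "I \<subseteq> E" and x: "x \<in> I" and y: "y \<in> I" and z: "z \<in> I"
    and xy: "vsim E \<sigma> x y" and yz: "vsim E \<sigma> y z"
  shows "kI \<sigma> I x y + kI \<sigma> I y z = kI \<sigma> I x z \<or>
         kI \<sigma> I x y + kI \<sigma> I y z = kI \<sigma> I x z + card (I \<inter> vcls E \<sigma> x)"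
proof -
  have xz: "vsim E \<sigma> x z" using vsim_trans[OF xy yz] .
  define N where "N = card (I \<inter> vcls E \<sigma> x)"
  have eq: "I \<inter> vcls E \<sigma> x = range (\<lambda>k. (\<sigma> I ^^ k) x)"
    using vsim_orbit[OF I x] unfolding vcls_def by auto
  note po = perm_orbit[OF vp_permutes[OF I] I(1) x]
  note a = kI_props[OF I x y xy] and b = kI_props[OF I y z yz] and c = kI_props[OF I x z xz]
  have Ny: "card (I \<inter> vcls E \<sigma> y) = N" using vcls_eq[OF xy] N_def by simp
  have "(\<sigma> I ^^ (kI \<sigma> I y z + kI \<sigma> I x y)) x = z" using a(1) b(1) by (simp add: funpow_add)
  then have "(\<sigma> I ^^ (kI \<sigma> I y z + kI \<sigma> I x y)) x = (\<sigma> I ^^ kI \<sigma> I x z) x" using c(1) by simp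
  then have m: "(kI \<sigma> I y z + kI \<sigma> I x y) mod N = kI \<sigma> I x z mod N"
    using po(4) eq N_def by simp
  have l: "kI \<sigma> I x z < N" "kI \<sigma> I x y < N" "kI \<sigma> I y z < N"
    using a(2) b(2) c(2) Ny N_def by auto
    have c: "kI \<sigma> I x z mod N = kI \<sigma> I x z" using l by simp
    show ?thesis
    proof (cases "kI \<sigma> I y z + kI \<sigma> I x y < N")
      case True then show ?thesis using m c by simp
    next
      case False
      then have "(kI \<sigma> I y z + kI \<sigma> I x y) mod N = kI \<sigma> I y z + kI \<sigma> I x y - N"
        using l by (simp add: le_mod_geq)
      then have "kI \<sigma> I x y + kI \<sigma> I y z = kI \<sigma> I x z + N" using m c False by simp
      then show ?thesis unfolding N_def by simp
    qed
qed

end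


lemma cmod_exp_i_minus1: "cmod (exp (\<i> * complex_of_real u) - 1) \<le> \<bar>u\<bar>"
proof -
  have e: "exp (\<i> * complex_of_real u) - 1 = Complex (cos u - 1) (sin u)"
    by (simp add: exp_Euler cos_of_real sin_of_real complex_eq_iff)
  have c: "cos u = 1 - 2 * (sin (u/2))\<^sup>2" using cos_double_sin[of "u/2"] by simp
  have s: "sin u = 2 * sin (u/2) * cos (u/2)" using sin_double[of "u/2"] by simp
  have "(cos u - 1)\<^sup>2 + (sin u)\<^sup>2 = 4 * (sin (u/2))\<^sup>2"
    unfolding c s using sin_cos_squared_add[of "u/2"] by algebra
  also have "\<dots> \<le> u\<^sup>2"
  proof -
    have "\<bar>sin (u/2)\<bar> \<le> \<bar>u/2\<bar>" by (rule abs_sin_x_le_abs_x)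
    then have "(sin (u/2))\<^sup>2 \<le> (u/2)\<^sup>2" by (metis abs_le_square_iff)
    then show ?thesis by (simp add: power_divide)
  qed
  finally have "sqrt ((cos u - 1)\<^sup>2 + (sin u)\<^sup>2) \<le> \<bar>u\<bar>"
    by (metis real_sqrt_abs real_sqrt_le_mono)
  then show ?thesis unfolding e cmod_def by simp
qed

lemma cd_set_ne: "{\<bar>a\<bar> | a. \<exists>m::int. a = t + of_int m * (L::real)} \<noteq> {}" by auto

lemma cd_bdd: "bdd_below {\<bar>a\<bar> | a. \<exists>m::int. a = t + of_int m * (L::real)}"
  by (rule bdd_belowI[of _ 0]) auto

lemma cd_le: "circdist L t \<le> \<bar>t + of_int m * L\<bar>"
  unfolding circdist_def by (rule cInf_lower[OF _ cd_bdd]) auto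

lemma cd_nonneg: "0 \<le> circdist L t"
  unfolding circdist_def by (rule cInf_greatest[OF cd_set_ne]) auto

lemma cd_abs: "circdist L t \<le> \<bar>t\<bar>"
  using cd_le[of L t 0] by simp

lemma cd_round:
  assumes L: "L > 0"
  shows "circdist L t = \<bar>t - of_int (round (t / L)) * L\<bar>"
proof (rule antisym)
  show "circdist L t \<le> \<bar>t - of_int (round (t / L)) * L\<bar>"
    using cd_le[of L t "- round (t / L)"] by simp
next
  define q where "q = t / L"
  define r where "r = round q"
  have rq: "\<bar>of_int r - q\<bar> \<le> 1/2" unfolding r_def by (rule of_int_round_abs_le)
  have tq: "t = q * L" using L unfolding q_def by simp
  have "\<bar>t - of_int r * L\<bar> \<le> \<bar>t + of_int m * L\<bar>" for m :: int
  proof (cases "- m = r")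
    case True then have "m = - r" by simp
    then show ?thesis by simp
  next
    case False
    then have "\<bar>of_int (- m) - of_int r\<bar> \<ge> (1::real)"
      by (metis of_int_1_le_iff of_int_abs of_int_diff zero_less_abs_iff diff_eq_eq add_0 int_one_le_iff_zero_less)
    then have "\<bar>q + of_int m\<bar> \<ge> \<bar>q - of_int r\<bar>" using rq by linarith
    then have "\<bar>q + of_int m\<bar> * L \<ge> \<bar>q - of_int r\<bar> * L" using L by (simp add: mult_right_mono)
    moreover have "t - of_int r * L = (q - of_int r) * L" "t + of_int m * L = (q + of_int m) * L"
      unfolding tq by (simp_all add: algebra_simps)
    moreover have "\<bar>(q - of_int r) * L\<bar> = \<bar>q - of_int r\<bar> * L" "\<bar>(q + of_int m) * L\<bar> = \<bar>q + of_int m\<bar> * L"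
      using L by (simp_all add: abs_mult)
    ultimately show ?thesis by simp
  qed
  then show "\<bar>t - of_int (round (t / L)) * L\<bar> \<le> circdist L t"
    unfolding circdist_def r_def q_def by (intro cInf_greatest[OF cd_set_ne]) auto
qed

lemma cd_zeroL: "circdist 0 t = \<bar>t\<bar>"
  unfolding circdist_def by simp

lemma cd_attain:
  assumes "L \<ge> 0" shows "\<exists>m::int. circdist L t = \<bar>t + of_int m * L\<bar>"
proof (cases "L = 0")
  case True then show ?thesis by (simp add: cd_zeroL)
next
  case False then have "L > 0" using assms by simp
  then show ?thesis using cd_round[of L t] by (intro exI[of _ "- round (t / L)"]) simp
qed

lemma cd_neg: "circdist L (- t) = circdist L t"
proof -
  have "{\<bar>a\<bar> | a. \<exists>m::int. a = - t + of_int m * L} = {\<bar>a\<bar> | a. \<exists>m::int. a = t + of_int m * L}"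
  proof (intro set_eqI iffI)
    fix z assume "z \<in> {\<bar>a\<bar> | a. \<exists>m::int. a = - t + of_int m * L}"
    then obtain m where "z = \<bar>- t + of_int m * L\<bar>" by auto
    then have "z = \<bar>t + of_int (- m) * L\<bar>" by simp
    then show "z \<in> {\<bar>a\<bar> | a. \<exists>m::int. a = t + of_int m * L}" by blast
  next
    fix z assume "z \<in> {\<bar>a\<bar> | a. \<exists>m::int. a = t + of_int m * L}"
    then obtain m where "z = \<bar>t + of_int m * L\<bar>" by auto
    then have "z = \<bar>- t + of_int (- m) * L\<bar>" by simp
    then show "z \<in> {\<bar>a\<bar> | a. \<exists>m::int. a = - t + of_int m * L}" by blast
  qed
  then show ?thesis unfolding circdist_def by simp
qed

lemma cd_period: "circdist L (t + of_int k * L) = circdist L t"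
proof -
  have "{\<bar>a\<bar> | a. \<exists>m::int. a = (t + of_int k * L) + of_int m * L} = {\<bar>a\<bar> | a. \<exists>m::int. a = t + of_int m * L}"
  proof (intro set_eqI iffI)
    fix z assume "z \<in> {\<bar>a\<bar> | a. \<exists>m::int. a = (t + of_int k * L) + of_int m * L}"
    then obtain m where "z = \<bar>(t + of_int k * L) + of_int m * L\<bar>" by auto
    then have "z = \<bar>t + of_int (k + m) * L\<bar>" by (simp add: algebra_simps)
    then show "z \<in> {\<bar>a\<bar> | a. \<exists>m::int. a = t + of_int m * L}" by blast
  next
    fix z assume "z \<in> {\<bar>a\<bar> | a. \<exists>m::int. a = t + of_int m * L}"
    then obtain m where "z = \<bar>t + of_int m * L\<bar>" by auto
    then have "z = \<bar>(t + of_int k * L) + of_int (m - k) * L\<bar>" by (simp add: algebra_simps)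
    then show "z \<in> {\<bar>a\<bar> | a. \<exists>m::int. a = (t + of_int k * L) + of_int m * L}" by blast
  qed
  then show ?thesis unfolding circdist_def by simp
qed

lemma cd_multiple: "circdist L (of_int k * L) = 0"
  using cd_le[of L "of_int k * L" "- k"] cd_nonneg[of L "of_int k * L"] by simp

lemma cd_self: "circdist L L = 0"
  using cd_multiple[of L 1] by simp

lemma cd_half: "L > 0 \<Longrightarrow> circdist L t \<le> L / 2"
proof -
  assume L: "L > 0"
  have "t - of_int (round (t / L)) * L = (t / L - of_int (round (t / L))) * L"
    using L by (simp add: field_simps)
  then have "\<bar>t - of_int (round (t / L)) * L\<bar> = \<bar>t / L - of_int (round (t / L))\<bar> * L"
    using L by (simp add: abs_mult abs_of_pos)
  also have "\<dots> \<le> 1/2 * L"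
    using of_int_round_abs_le[of "t / L"] L by (intro mult_right_mono) (auto simp: abs_minus_commute)
  finally show ?thesis using cd_round[OF L, of t] by simp
qed

lemma cd_zero_imp: "L > 0 \<Longrightarrow> circdist L t = 0 \<Longrightarrow> \<exists>m::int. t = of_int m * L"
  using cd_round[of L t] by (intro exI[of _ "round (t / L)"]) simp

lemma cd_triangle:
  assumes L: "L \<ge> 0" shows "circdist L (s + t) \<le> circdist L s + circdist L t"
proof -
  obtain m1 where m1: "circdist L s = \<bar>s + of_int m1 * L\<bar>" using cd_attain[OF L] by blast
  obtain m2 where m2: "circdist L t = \<bar>t + of_int m2 * L\<bar>" using cd_attain[OF L] by blast
  have "circdist L (s + t) \<le> \<bar>s + t + of_int (m1 + m2) * L\<bar>" by (rule cd_le)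
  also have "\<dots> = \<bar>(s + of_int m1 * L) + (t + of_int m2 * L)\<bar>" by (simp add: algebra_simps)
  also have "\<dots> \<le> \<bar>s + of_int m1 * L\<bar> + \<bar>t + of_int m2 * L\<bar>" by (rule abs_triangle_ineq)
  finally show ?thesis using m1 m2 by simp
qed

lemma cd_diff_tri:
  assumes L: "L \<ge> 0" shows "circdist L u \<le> circdist L (u - v) + circdist L v"
  using cd_triangle[OF L, of "u - v" v] by simp

lemma cd_lip:
  assumes L: "L \<ge> 0" shows "\<bar>circdist L a - circdist L b\<bar> \<le> circdist L (a - b)"
proof -
  have 1: "circdist L a \<le> circdist L (a - b) + circdist L b" by (rule cd_diff_tri[OF L])
  have 2: "circdist L b \<le> circdist L (b - a) + circdist L a" by (rule cd_diff_tri[OF L])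
  have 3: "circdist L (b - a) = circdist L (a - b)" using cd_neg[of L "a - b"] by simp
  show ?thesis using 1 2 3 by linarith
qed

lemma exp_int_mult_1:
  assumes "exp (\<i> * complex_of_real (a * L)) = 1"
  shows "exp (\<i> * complex_of_real (a * (of_int m * L))) = 1"
proof -
  obtain n :: int where n: "a * L = of_int (2 * n) * pi"
    using assms unfolding exp_eq_1 by auto
  have "a * (of_int m * L) = of_int (2 * (m * n)) * pi" using n by (simp add: algebra_simps)
  then have "\<exists>k::int. a * (of_int m * L) = of_int (2 * k) * pi" by blast
  then show ?thesis unfolding exp_eq_1 by simp
qed

lemma exp_cd:
  assumes L: "L \<ge> 0" and e: "exp (\<i> * complex_of_real (a * L)) = 1"
  shows "cmod (exp (\<i> * complex_of_real (a * s)) - exp (\<i> * complex_of_real (a * t)))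
           \<le> \<bar>a\<bar> * circdist L (s - t)"
proof -
  obtain m where m: "circdist L (s - t) = \<bar>s - t + of_int m * L\<bar>" using cd_attain[OF L] by blast
  define w where "w = s - t + of_int m * L"
  have em: "exp (\<i> * complex_of_real (a * (of_int m * L))) = 1" by (rule exp_int_mult_1[OF e])
  have "exp (\<i> * complex_of_real (a * s)) =
        exp (\<i> * complex_of_real (a * t)) * exp (\<i> * complex_of_real (a * w)) *
        inverse (exp (\<i> * complex_of_real (a * (of_int m * L))))"
    unfolding w_def by (simp add: exp_add[symmetric] exp_minus[symmetric] algebra_simps)
  then have "exp (\<i> * complex_of_real (a * s)) =
        exp (\<i> * complex_of_real (a * t)) * exp (\<i> * complex_of_real (a * w))"
    using em by simp
  then have "exp (\<i> * complex_of_real (a * s)) - exp (\<i> * complex_of_real (a * t)) =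
        exp (\<i> * complex_of_real (a * t)) * (exp (\<i> * complex_of_real (a * w)) - 1)"
    by (simp add: algebra_simps)
  then have "cmod (exp (\<i> * complex_of_real (a * s)) - exp (\<i> * complex_of_real (a * t))) =
        cmod (exp (\<i> * complex_of_real (a * w)) - 1)"
    by (simp add: norm_mult norm_exp_i_times)
  also have "\<dots> \<le> \<bar>a * w\<bar>" by (rule cmod_exp_i_minus1)
  finally show ?thesis using m w_def by (simp add: abs_mult)
qed

lemma exp_cd0:
  assumes L: "L \<ge> 0" and e: "exp (\<i> * complex_of_real (a * L)) = 1"
    and z: "circdist L (s - t) = 0"
  shows "exp (\<i> * complex_of_real (a * s)) = exp (\<i> * complex_of_real (a * t))"
  using exp_cd[OF L e, of s t] z by simp

lemma vder_iff_quot: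
  fixes g :: "real \<Rightarrow> complex"
  shows "(g has_vector_derivative v) (at t) \<longleftrightarrow>
         ((\<lambda>h. (g (t + h) - g t) / complex_of_real h) \<longlongrightarrow> v) (at 0)"
proof -
  have bl: "bounded_linear (\<lambda>h::real. h *\<^sub>R v)" by (rule bounded_linear_scaleR_left)
  have eq: "norm (g (t + h) - g t - h *\<^sub>R v) / norm h = norm ((g (t + h) - g t) / complex_of_real h - v)"
    if "h \<noteq> 0" for h
  proof -
    have "(g (t + h) - g t) / complex_of_real h - v = (g (t + h) - g t - h *\<^sub>R v) / complex_of_real h"
      using that by (simp add: scaleR_conv_of_real field_simps)
    then show ?thesis by (simp add: norm_divide)
  qed
  have "(g has_vector_derivative v) (at t) \<longleftrightarrow>
        ((\<lambda>h. norm (g (t + h) - g t - h *\<^sub>R v) / norm h) \<longlongrightarrow> 0) (at 0)"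
    unfolding has_vector_derivative_def has_derivative_at using bl by simp
  also have "\<dots> \<longleftrightarrow> ((\<lambda>h. norm ((g (t + h) - g t) / complex_of_real h - v)) \<longlongrightarrow> 0) (at 0)"
    by (rule tendsto_cong) (use eq in \<open>auto simp: eventually_at_filter\<close>)
  also have "\<dots> \<longleftrightarrow> ((\<lambda>h. (g (t + h) - g t) / complex_of_real h) \<longlongrightarrow> v) (at 0)"
    by (simp add: tendsto_norm_zero_iff LIM_zero_iff)
  finally show ?thesis .
qed

lemma exp_quot:
  "((\<lambda>h. (exp (c * complex_of_real h) - 1) / complex_of_real h) \<longlongrightarrow> c) (at 0)"
proof -
  have "((\<lambda>w. exp (c * w)) has_field_derivative c * exp (c * of_real 0)) (at (of_real 0))"
    by (auto intro!: derivative_eq_intros)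
  then have "((\<lambda>x. exp (c * of_real x)) has_vector_derivative c) (at (0::real))"
    using has_vector_derivative_real_field by fastforce
  then show ?thesis unfolding vder_iff_quot by simp
qed

lemma ode_exp:
  fixes g :: "real \<Rightarrow> complex"
  assumes "\<And>t. ((\<lambda>h. (g (t + h) - g t) / complex_of_real h) \<longlongrightarrow> b * g t) (at 0)"
  shows "g t = exp (b * of_real t) * g 0"
proof -
  have dg: "(g has_vector_derivative b * g t) (at t)" for t
    using assms vder_iff_quot by blast
  have de: "((\<lambda>t. exp (- b * of_real t)) has_vector_derivative (- b) * exp (- b * of_real t)) (at t)" for t
  proof -
    have "((\<lambda>w. exp (- b * w)) has_field_derivative (- b) * exp (- b * of_real t)) (at (of_real t))"
      by (auto intro!: derivative_eq_intros)
    then show ?thesis using has_vector_derivative_real_field by fastforce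
  qed
  have "((\<lambda>t. exp (- b * of_real t) * g t) has_vector_derivative 0) (at t within UNIV)" for t
    using has_vector_derivative_mult[OF de dg, of t] by (simp add: algebra_simps)
  then obtain c where c: "\<And>t. exp (- b * of_real t) * g t = c"
    using has_vector_derivative_zero_constant[of UNIV "\<lambda>t. exp (- b * of_real t) * g t"] by auto
  have "g t = exp (b * of_real t) * (exp (- b * of_real t) * g t)"
    by (simp add: exp_minus field_simps)
  also have "\<dots> = exp (b * of_real t) * g 0" using c[of t] c[of 0] by simp
  finally show ?thesis .
qed


locale P55 =
  fixes E :: "'a set" and enum :: "nat \<Rightarrow> 'a" and \<sigma> :: "'a set \<Rightarrow> 'a \<Rightarrow> 'a"
    and Ehat :: "'a set" and dhat :: "'a \<Rightarrow> 'a \<Rightarrow> real" and S :: "real \<Rightarrow> 'a \<Rightarrow> 'a"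
  assumes E: "countable E" "infinite E" "bij_betw enum UNIV E"
    and vp: "virtual_perm E \<sigma>"
    and lam_conv: "\<forall>x\<in>E. convergent (lam_seq E enum \<sigma> x)"
    and Delta_conv: "\<forall>x y. vsim E \<sigma> x y \<longrightarrow> convergent (Delta_seq enum \<sigma> x y)"
    and lam_pos: "\<forall>x\<in>E. lam E enum \<sigma> x > 0 \<longleftrightarrow> \<not> vfixed E \<sigma> x"
    and compl: "is_completion E (vdist E enum \<sigma>) Ehat dhat"
    and ext: "extensions_exist E enum \<sigma> Ehat dhat"
    and cls: "class_structure E enum \<sigma> Ehat dhat"
    and flow: "is_flow E enum \<sigma> Ehat dhat S"
begin

abbreviation "V \<equiv> vsim E \<sigma>"
abbreviation "lm \<equiv> lam E enum \<sigma>"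
abbreviation "Dl \<equiv> Delta enum \<sigma>"
abbreviation "lk \<equiv> lamk E enum \<sigma>"

lemma card_Iset: "card (Iset enum n) = n"
proof -
  have "inj enum" using E(3) bij_betw_def by blast
  then show ?thesis unfolding Iset_def by (simp add: card_image inj_on_subset)
qed

lemma Iset_sub: "Iset enum n \<subseteq> E" "finite (Iset enum n)"
  using E(3) unfolding Iset_def bij_betw_def by auto

lemma Iset_ev: "x \<in> E \<Longrightarrow> \<exists>N. \<forall>n\<ge>N. x \<in> Iset enum n"
proof -
  assume "x \<in> E"
  then obtain i where "enum i = x" using E(3) unfolding bij_betw_def by auto
  then show ?thesis unfolding Iset_def by (intro exI[of _ "Suc i"]) auto
qed

lemma Iset_ev3:
  assumes "x \<in> E" "y \<in> E" "z \<in> E"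
  shows "eventually (\<lambda>n. x \<in> Iset enum n \<and> y \<in> Iset enum n \<and> z \<in> Iset enum n) sequentially"
proof -
  obtain N1 where "\<forall>n\<ge>N1. x \<in> Iset enum n" using Iset_ev assms by blast
  moreover obtain N2 where "\<forall>n\<ge>N2. y \<in> Iset enum n" using Iset_ev assms by blast
  moreover obtain N3 where "\<forall>n\<ge>N3. z \<in> Iset enum n" using Iset_ev assms by blast
  ultimately show ?thesis unfolding eventually_sequentially
    by (intro exI[of _ "max N1 (max N2 N3)"]) auto
qed

lemma lam_lim: "x \<in> E \<Longrightarrow> lam_seq E enum \<sigma> x \<longlonglongrightarrow> lm x"
  using lam_conv unfolding lam_def by (simp add: convergent_LIMSEQ_iff)

lemma lam_seq_bnd: "0 \<le> lam_seq E enum \<sigma> x n" "lam_seq E enum \<sigma> x n \<le> 1"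
proof -
  have "card (Iset enum n \<inter> vcls E \<sigma> x) \<le> card (Iset enum n)"
    using Iset_sub by (intro card_mono) auto
  then show "0 \<le> lam_seq E enum \<sigma> x n" "lam_seq E enum \<sigma> x n \<le> 1"
    unfolding lam_seq_def by (auto simp: divide_le_eq_1)
qed

lemma lam_bnd: "x \<in> E \<Longrightarrow> 0 \<le> lm x \<and> lm x \<le> 1"
  using LIMSEQ_le_const[OF lam_lim, of x 0] LIMSEQ_le_const2[OF lam_lim, of x 1] lam_seq_bnd by auto

lemma lam_cls: "V x y \<Longrightarrow> lm x = lm y"
  unfolding lam_def lam_seq_def using vcls_eq[OF vp] by simp

lemma lam_zero_fixed:
  assumes "x \<in> E" "lm x = 0" "V x y" shows "y = x"
proof -
  have fx: "vfixed E \<sigma> x" using lam_pos assms by auto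
  obtain I n where I: "finite I" "I \<subseteq> E" "x \<in> I" "(\<sigma> I ^^ n) x = y"
    using assms(3) unfolding vsim_def by blast
  have "\<sigma> I x = x" using fx I unfolding vfixed_def by blast
  then have "(\<sigma> I ^^ n) x = x" by (induction n) auto
  then show ?thesis using I by simp
qed

lemma Delta_self: "Dl x x = 0"
proof -
  have "Delta_seq enum \<sigma> x x = (\<lambda>n. 0)"
    unfolding Delta_seq_def kI_def by (auto intro!: Least_equality)
  then show ?thesis unfolding Delta_def by (simp add: lim_const)
qed

lemma Delta_lim: "V x y \<Longrightarrow> Delta_seq enum \<sigma> x y \<longlonglongrightarrow> Dl x y"
  using Delta_conv unfolding Delta_def by (simp add: convergent_LIMSEQ_iff)

lemma Delta_cocycle:
  assumes xy: "V x y" and yz: "V y z" and L: "lm x > 0"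
  shows "\<exists>m::int. Dl x z = Dl x y + Dl y z + of_int m * lm x"
proof -
  have xz: "V x z" using vsim_trans[OF vp xy yz] .
  have xE: "x \<in> E" "y \<in> E" "z \<in> E" using xy yz vsim_E[OF vp] by auto
  define a where "a n = Delta_seq enum \<sigma> x y n + Delta_seq enum \<sigma> y z n - Delta_seq enum \<sigma> x z n" for n
  define j where "j n = (if kI \<sigma> (Iset enum n) x y + kI \<sigma> (Iset enum n) y z
                            = kI \<sigma> (Iset enum n) x z then 0 else (1::real))" for n
  have alim: "a \<longlonglongrightarrow> Dl x y + Dl y z - Dl x z"
    unfolding a_def by (intro tendsto_intros Delta_lim xy yz xz)
  have llim: "lam_seq E enum \<sigma> x \<longlonglongrightarrow> lm x" using lam_lim xE by simp
  have ev: "eventually (\<lambda>n. a n = j n * lam_seq E enum \<sigma> x n) sequentially"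
    using Iset_ev3[OF xE]
  proof eventually_elim
    case (elim n)
    let ?I = "Iset enum n"
    have c: "kI \<sigma> ?I x y + kI \<sigma> ?I y z = kI \<sigma> ?I x z \<or>
         kI \<sigma> ?I x y + kI \<sigma> ?I y z = kI \<sigma> ?I x z + card (?I \<inter> vcls E \<sigma> x)"
      using kI_cocycle[OF vp Iset_sub(2) Iset_sub(1)] elim xy yz by blast
    show ?case
    proof (cases "kI \<sigma> ?I x y + kI \<sigma> ?I y z = kI \<sigma> ?I x z")
      case True
      then have "real (kI \<sigma> ?I x y) + real (kI \<sigma> ?I y z) = real (kI \<sigma> ?I x z)"
        by (metis of_nat_add)
      then show ?thesis unfolding a_def j_def Delta_seq_def using True
        by (simp add: add_divide_distrib[symmetric] diff_divide_distrib[symmetric])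
    next
      case False
      then have "real (kI \<sigma> ?I x y) + real (kI \<sigma> ?I y z) = real (kI \<sigma> ?I x z) + real (card (?I \<inter> vcls E \<sigma> x))"
        using c by (metis of_nat_add)
      then show ?thesis unfolding a_def j_def Delta_seq_def lam_seq_def using False
        by (simp add: add_divide_distrib[symmetric] diff_divide_distrib[symmetric])
    qed
  qed
  have pos: "eventually (\<lambda>n. lam_seq E enum \<sigma> x n > 0) sequentially"
    using order_tendstoD(1)[OF llim L] .
  have e2: "eventually (\<lambda>n. a n / lam_seq E enum \<sigma> x n = j n) sequentially"
    using ev pos by eventually_elim simp
  have "(\<lambda>n. a n / lam_seq E enum \<sigma> x n) \<longlonglongrightarrow> (Dl x y + Dl y z - Dl x z) / lm x"
    using L by (intro tendsto_intros alim llim) simp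
  from Lim_transform_eventually[OF this e2] have jlim: "j \<longlonglongrightarrow> (Dl x y + Dl y z - Dl x z) / lm x" .
  have "(Dl x y + Dl y z - Dl x z) / lm x \<in> {0, 1}"
    by (rule Lim_in_closed_set[OF _ _ _ jlim]) (auto simp: j_def finite_imp_closed)
  then have "Dl x y + Dl y z - Dl x z = 0 \<or> Dl x y + Dl y z - Dl x z = lm x"
    using L by (auto simp: field_simps)
  then show ?thesis
  proof
    assume "Dl x y + Dl y z - Dl x z = 0"
    then show ?thesis by (intro exI[of _ 0]) simp
  next
    assume "Dl x y + Dl y z - Dl x z = lm x"
    then show ?thesis by (intro exI[of _ "-1"]) simp
  qed
qed

lemma vcls_disj: "\<not> V x y \<Longrightarrow> vcls E \<sigma> x \<inter> vcls E \<sigma> y = {}"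
  unfolding vcls_def using vsim_sym[OF vp] vsim_trans[OF vp] by blast

lemma density_sum:
  assumes X: "finite X" "X \<subseteq> E" and nd: "\<And>x y. x \<in> X \<Longrightarrow> y \<in> X \<Longrightarrow> x \<noteq> y \<Longrightarrow> \<not> V x y"
  shows "(\<Sum>x\<in>X. lm x) \<le> 1"
proof -
  have "(\<lambda>n. \<Sum>x\<in>X. lam_seq E enum \<sigma> x n) \<longlonglongrightarrow> (\<Sum>x\<in>X. lm x)"
    using X by (intro tendsto_sum lam_lim) auto
  moreover have "(\<Sum>x\<in>X. lam_seq E enum \<sigma> x n) \<le> 1" for n
  proof -
    let ?I = "Iset enum n"
    have "(\<Sum>x\<in>X. real (card (?I \<inter> vcls E \<sigma> x))) = real (\<Sum>x\<in>X. card (?I \<inter> vcls E \<sigma> x))"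
      by simp
    also have "(\<Sum>x\<in>X. card (?I \<inter> vcls E \<sigma> x)) = card (\<Union>x\<in>X. ?I \<inter> vcls E \<sigma> x)"
    proof (intro card_UN_disjoint[symmetric])
      show "finite X" using X by simp
      show "\<forall>i\<in>X. finite (?I \<inter> vcls E \<sigma> i)" using Iset_sub by simp
      show "\<forall>i\<in>X. \<forall>j\<in>X. i \<noteq> j \<longrightarrow> (?I \<inter> vcls E \<sigma> i) \<inter> (?I \<inter> vcls E \<sigma> j) = {}"
        using nd vcls_disj by blast
    qed
    also have "\<dots> \<le> card ?I" using Iset_sub by (intro card_mono) auto
    finally have "(\<Sum>x\<in>X. real (card (?I \<inter> vcls E \<sigma> x))) \<le> real (card ?I)" by simp
    then show ?thesis unfolding lam_seq_def sum_divide_distrib[symmetric]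
      by (cases "card ?I = 0") (auto simp: divide_le_eq_1)
  qed
  ultimately show ?thesis using LIMSEQ_le_const2 by blast
qed

end


context P55 begin

abbreviation "lh \<equiv> lamhat E enum \<sigma> dhat"
abbreviation "sh \<equiv> simhat E \<sigma> dhat"
abbreviation "Dh \<equiv> Deltahat E enum \<sigma> dhat"
abbreviation "hc \<equiv> hatcls E \<sigma> Ehat dhat"
abbreviation "cd \<equiv> circdist"

lemma met: "Metric_space Ehat dhat" using compl unfolding is_completion_def by blast
lemma d_sym: "dhat x y = dhat y x" using Metric_space.commute[OF met] .
lemma d_tri: "x \<in> Ehat \<Longrightarrow> y \<in> Ehat \<Longrightarrow> z \<in> Ehat \<Longrightarrow> dhat x z \<le> dhat x y + dhat y z"
  using Metric_space.triangle[OF met] .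
lemma d_zero: "x \<in> Ehat \<Longrightarrow> y \<in> Ehat \<Longrightarrow> dhat x y = 0 \<longleftrightarrow> x = y"
  using Metric_space.zero[OF met] .
lemma d_nonneg: "0 \<le> dhat x y" using Metric_space.nonneg[OF met] .
lemma d_self: "x \<in> Ehat \<Longrightarrow> dhat x x = 0" using d_zero by simp
lemma E_sub: "E \<subseteq> Ehat" using compl unfolding is_completion_def by blast
lemma d_E: "x \<in> E \<Longrightarrow> y \<in> E \<Longrightarrow> dhat x y = vdist E enum \<sigma> x y"
  using compl unfolding is_completion_def by blast
lemma dense: "x \<in> Ehat \<Longrightarrow> e > 0 \<Longrightarrow> \<exists>y\<in>E. dhat x y < e"
  using compl unfolding is_completion_def by blast

lemma dE_V: assumes "x \<in> E" "y \<in> E" "V x y" shows "dhat x y \<le> 1/2"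
proof (cases "lm x > 0")
  case True
  have "dhat x y = cd (lm x) (Dl x y)" using d_E assms unfolding vdist_def by simp
  also have "\<dots> \<le> lm x / 2" by (rule cd_half[OF True])
  also have "\<dots> \<le> 1/2" using lam_bnd assms by auto
  finally show ?thesis .
next
  case False
  then have "lm x = 0" using lam_bnd assms by force
  then have "y = x" using lam_zero_fixed assms by blast
  then show ?thesis using d_self E_sub assms by auto
qed

lemma dE_nV: "x \<in> E \<Longrightarrow> y \<in> E \<Longrightarrow> \<not> V x y \<Longrightarrow> dhat x y = 1"
  using d_E unfolding vdist_def by simp

lemma dE_iff: "x \<in> E \<Longrightarrow> y \<in> E \<Longrightarrow> V x y \<longleftrightarrow> dhat x y < 1"
  using dE_V dE_nV by fastforce

lemma seqs_ex: assumes x: "x \<in> Ehat" shows "\<exists>xs. xs \<in> seqs_to E dhat x"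
proof -
  define xs where "xs n = (SOME y. y \<in> E \<and> dhat x y < inverse (real (Suc n)))" for n
  have p: "xs n \<in> E \<and> dhat x (xs n) < inverse (real (Suc n))" for n
  proof -
    have "\<exists>y. y \<in> E \<and> dhat x y < inverse (real (Suc n))"
      using dense[OF x, of "inverse (real (Suc n))"] by auto
    then show ?thesis unfolding xs_def by (rule someI_ex)
  qed
  have "(\<lambda>n. dhat (xs n) x) \<longlonglongrightarrow> 0"
  proof (rule Lim_null_comparison[OF _ LIMSEQ_inverse_real_of_nat])
    show "\<forall>\<^sub>F n in sequentially. norm (dhat (xs n) x) \<le> inverse (real (Suc n))"
      using p d_sym d_nonneg by (intro always_eventually allI) (simp add: less_imp_le)
  qed
  then show ?thesis using p unfolding seqs_to_def by auto
qed

lemma seqs_E: "xs \<in> seqs_to E dhat x \<Longrightarrow> xs n \<in> E"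
  unfolding seqs_to_def by auto

lemma seqs_lim: "xs \<in> seqs_to E dhat x \<Longrightarrow> (\<lambda>n. dhat (xs n) x) \<longlonglongrightarrow> 0"
  unfolding seqs_to_def by auto

lemma seqs_close: "xs \<in> seqs_to E dhat x \<Longrightarrow> e > 0 \<Longrightarrow> eventually (\<lambda>n. dhat (xs n) x < e) sequentially"
  using order_tendstoD(2)[OF seqs_lim] by blast

lemma const_seq: "x \<in> E \<Longrightarrow> (\<lambda>n. x) \<in> seqs_to E dhat x"
  unfolding seqs_to_def using d_self E_sub by auto

lemma d_lim:
  assumes x: "x \<in> Ehat" and y: "y \<in> Ehat" and xs: "xs \<in> seqs_to E dhat x" and ys: "ys \<in> seqs_to E dhat y"
  shows "(\<lambda>n. dhat (xs n) (ys n)) \<longlonglongrightarrow> dhat x y"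
proof -
  have "(\<lambda>n. dhat (xs n) (ys n) - dhat x y) \<longlonglongrightarrow> 0"
  proof (rule Lim_null_comparison)
    show "(\<lambda>n. dhat (xs n) x + dhat (ys n) y) \<longlonglongrightarrow> 0"
      using tendsto_add[OF seqs_lim[OF xs] seqs_lim[OF ys]] by simp
    show "\<forall>\<^sub>F n in sequentially. norm (dhat (xs n) (ys n) - dhat x y) \<le> dhat (xs n) x + dhat (ys n) y"
    proof (intro always_eventually allI)
      fix n
      have a: "xs n \<in> Ehat" "ys n \<in> Ehat" using seqs_E[OF xs] seqs_E[OF ys] E_sub by auto
      have "dhat (xs n) (ys n) \<le> dhat (xs n) x + dhat x y + dhat y (ys n)"
        using d_tri[OF a(1) x a(2)] d_tri[OF x y a(2)] by simp
      moreover have "dhat x y \<le> dhat x (xs n) + dhat (xs n) (ys n) + dhat (ys n) y"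
        using d_tri[OF x a(1) y] d_tri[OF a(1) a(2) y] by simp
      ultimately show "norm (dhat (xs n) (ys n) - dhat x y) \<le> dhat (xs n) x + dhat (ys n) y"
        using d_sym[of x "xs n"] d_sym[of y "ys n"] by simp
    qed
  qed
  then show ?thesis by (simp add: LIM_zero_iff)
qed

lemma sh_iff:
  assumes x: "x \<in> Ehat" and y: "y \<in> Ehat"
  shows "sh x y \<longleftrightarrow> dhat x y < 1" and "sh x y \<Longrightarrow> dhat x y \<le> 1/2"
proof -
  obtain xs ys where xs: "xs \<in> seqs_to E dhat x" and ys: "ys \<in> seqs_to E dhat y"
    using seqs_ex x y by blast
  have half: "dhat x y \<le> 1/2" if "sh x y"
  proof -
    have "eventually (\<lambda>n. V (xs n) (ys n)) sequentially"
      using that xs ys unfolding simhat_def by blast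
    then have "eventually (\<lambda>n. dhat (xs n) (ys n) \<le> 1/2) sequentially"
      by eventually_elim (use dE_V seqs_E[OF xs] seqs_E[OF ys] in blast)
    then show ?thesis
      using tendsto_le[OF trivial_limit_sequentially tendsto_const d_lim[OF x y xs ys]] by blast
  qed
  show "sh x y \<Longrightarrow> dhat x y \<le> 1/2" by (rule half)
  show "sh x y \<longleftrightarrow> dhat x y < 1"
  proof
    assume "sh x y" then show "dhat x y < 1" using half by simp
  next
    assume lt: "dhat x y < 1"
    show "sh x y" unfolding simhat_def
    proof (intro ballI)
      fix as bs assume as: "as \<in> seqs_to E dhat x" and bs: "bs \<in> seqs_to E dhat y"
      have "eventually (\<lambda>n. dhat (as n) (bs n) < 1) sequentially"
        using order_tendstoD(2)[OF d_lim[OF x y as bs] lt] .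
      then show "eventually (\<lambda>n. V (as n) (bs n)) sequentially"
        by eventually_elim (use dE_iff seqs_E[OF as] seqs_E[OF bs] in blast)
    qed
  qed
qed

definition R where "R x y \<longleftrightarrow> x \<in> Ehat \<and> y \<in> Ehat \<and> dhat x y < 1"

lemma R_half: assumes "R x y" shows "dhat x y \<le> 1/2"
proof -
  have h: "x \<in> Ehat" "y \<in> Ehat" "dhat x y < 1" using assms unfolding R_def by auto
  have "sh x y" using sh_iff(1)[OF h(1,2)] h(3) by simp
  then show ?thesis using sh_iff(2)[OF h(1,2)] by simp
qed

lemma R_sym: "R x y \<Longrightarrow> R y x" unfolding R_def using d_sym by auto

lemma R_refl: "x \<in> Ehat \<Longrightarrow> R x x" unfolding R_def using d_self by auto

lemma R_E: "x \<in> E \<Longrightarrow> y \<in> E \<Longrightarrow> R x y \<longleftrightarrow> V x y"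
  unfolding R_def using dE_iff E_sub by auto

lemma R_trans:
  assumes xy: "R x y" and yz: "R y z" shows "R x z"
proof -
  have h: "x \<in> Ehat" "y \<in> Ehat" "z \<in> Ehat" using xy yz unfolding R_def by auto
  have dxy: "dhat x y \<le> 1/2" "dhat y z \<le> 1/2" using R_half xy yz by auto
  obtain x' where x': "x' \<in> E" "dhat x x' < 1/8" using dense[OF h(1), of "1/8"] by auto
  obtain y' where y': "y' \<in> E" "dhat y y' < 1/8" using dense[OF h(2), of "1/8"] by auto
  obtain z' where z': "z' \<in> E" "dhat z z' < 1/8" using dense[OF h(3), of "1/8"] by auto
  have E': "x' \<in> Ehat" "y' \<in> Ehat" "z' \<in> Ehat" using x' y' z' E_sub by auto
  have "dhat x' y' \<le> dhat x' x + dhat x y + dhat y y'"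
    using d_tri[OF E'(1) h(1) E'(2)] d_tri[OF h(1) h(2) E'(2)] by simp
  then have "dhat x' y' < 1" using x' y' dxy d_sym[of x' x] by simp
  then have "V x' y'" using dE_iff x' y' by blast
  have "dhat y' z' \<le> dhat y' y + dhat y z + dhat z z'"
    using d_tri[OF E'(2) h(2) E'(3)] d_tri[OF h(2) h(3) E'(3)] by simp
  then have "dhat y' z' < 1" using z' y' dxy d_sym[of y' y] by simp
  then have "V y' z'" using dE_iff z' y' by blast
  then have "V x' z'" using vsim_trans[OF vp \<open>V x' y'\<close>] by blast
  then have "dhat x' z' \<le> 1/2" using dE_V x' z' by blast
  have "dhat x z \<le> dhat x x' + dhat x' z' + dhat z' z"
    using d_tri[OF h(1) E'(1) h(3)] d_tri[OF E'(1) E'(3) h(3)] by simp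
  then have "dhat x z < 1" using x' z' \<open>dhat x' z' \<le> 1/2\<close> d_sym[of z' z] by simp
  then show ?thesis using h unfolding R_def by simp
qed

lemma sh_R: "x \<in> Ehat \<Longrightarrow> y \<in> Ehat \<Longrightarrow> sh x y \<longleftrightarrow> R x y"
  using sh_iff(1) unfolding R_def by simp

lemma hc_iff: "y \<in> hc x \<longleftrightarrow> y \<in> Ehat \<and> sh x y"
  unfolding hatcls_def by simp

lemma lh_lim:
  assumes x: "x \<in> Ehat" and xs: "xs \<in> seqs_to E dhat x"
  shows "(\<lambda>n. lm (xs n)) \<longlonglongrightarrow> lh x"
proof -
  have e1: "\<forall>x\<in>Ehat. \<exists>L. \<forall>xs\<in>seqs_to E dhat x. (\<lambda>n. lm (xs n)) \<longlonglongrightarrow> L"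
    using ext unfolding extensions_exist_def by (rule conjunct1)
  obtain L where L: "\<forall>xs\<in>seqs_to E dhat x. (\<lambda>n. lm (xs n)) \<longlonglongrightarrow> L"
    using e1 x by blast
  have "(SOME xs. xs \<in> seqs_to E dhat x) \<in> seqs_to E dhat x"
    using seqs_ex[OF x] by (rule someI_ex)
  then have "(\<lambda>n. lm ((SOME xs. xs \<in> seqs_to E dhat x) n)) \<longlonglongrightarrow> L" using L by blast
  then have "lh x = L" unfolding lamhat_def by (rule limI)
  then show ?thesis using L xs by simp
qed

lemma lh_E: assumes x: "x \<in> E" shows "lh x = lm x"
proof -
  have "(\<lambda>n. lm x) \<longlonglongrightarrow> lh x" using lh_lim[OF _ const_seq[OF x]] E_sub x by auto
  then show ?thesis using LIMSEQ_unique[OF tendsto_const] by metis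
qed

lemma lh_near:
  assumes x: "x \<in> Ehat" and y: "y \<in> E" and dxy: "dhat x y < 1"
  shows "lh x = lm y"
proof -
  obtain xs where xs: "xs \<in> seqs_to E dhat x" using seqs_ex x by blast
  have yh: "y \<in> Ehat" using y E_sub by auto
  have "eventually (\<lambda>n. dhat (xs n) x < 1 - dhat x y) sequentially"
    using seqs_close[OF xs] dxy by simp
  then have "eventually (\<lambda>n. lm y = lm (xs n)) sequentially"
  proof eventually_elim
    case (elim n)
    have xn: "xs n \<in> E" "xs n \<in> Ehat" using seqs_E[OF xs] E_sub by auto
    have "dhat (xs n) y \<le> dhat (xs n) x + dhat x y" by (rule d_tri[OF xn(2) x yh])
    then have "dhat (xs n) y < 1" using elim by simp
    then have "V (xs n) y" using dE_iff[OF xn(1) y] by simp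
    then show ?case using lam_cls by simp
  qed
  from Lim_transform_eventually[OF tendsto_const this] have "(\<lambda>n. lm (xs n)) \<longlonglongrightarrow> lm y" .
  with lh_lim[OF x xs] show ?thesis using LIMSEQ_unique by metis
qed

lemma lh_R: assumes "R x y" shows "lh x = lh y"
proof -
  have h: "x \<in> Ehat" "y \<in> Ehat" "dhat x y \<le> 1/2" using assms R_half unfolding R_def by auto
  obtain z where z: "z \<in> E" "dhat x z < 1/4" using dense[OF h(1), of "1/4"] by auto
  have zh: "z \<in> Ehat" using z E_sub by auto
  have "dhat y z \<le> dhat y x + dhat x z" by (rule d_tri[OF h(2) h(1) zh])
  then have "dhat y z < 1" using h z d_sym[of y x] by simp
  then show ?thesis using lh_near[OF h(1) z(1)] lh_near[OF h(2) z(1)] z by simp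
qed

lemma lh_bnd: assumes x: "x \<in> Ehat" shows "0 \<le> lh x \<and> lh x \<le> 1"
proof -
  obtain z where z: "z \<in> E" "dhat x z < 1" using dense[OF x, of 1] by auto
  then show ?thesis using lh_near[OF x z(1)] lam_bnd by simp
qed

lemma lh_ev:
  assumes x: "x \<in> Ehat" and xs: "xs \<in> seqs_to E dhat x"
  shows "eventually (\<lambda>n. lm (xs n) = lh x) sequentially"
proof -
  have "eventually (\<lambda>n. dhat (xs n) x < 1) sequentially" using seqs_close[OF xs, of 1] by simp
  then show ?thesis
proof eventually_elim
  case (elim n)
  then show ?case using lh_near[OF x seqs_E[OF xs]] d_sym by simp
qed
qed

lemma hc_def': "hc x = {y \<in> Ehat. sh x y}" unfolding hatcls_def by simp

definition cK where "cK = {k. k \<ge> 1 \<and> lk k > 0}"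

lemma cls1: "\<exists>c. (\<forall>k\<in>cK. c k \<in> Ehat \<and> lh (c k) = lk k \<and>
                    isometric_circle dhat (hc (c k)) (lk k)) \<and>
           inj_on (\<lambda>k. hc (c k)) cK \<and>
           (\<forall>x\<in>Ehat. lh x > 0 \<longrightarrow> (\<exists>k\<in>cK. x \<in> hc (c k)))"
  using cls[unfolded class_structure_def, THEN conjunct1] unfolding Let_def cK_def .

lemma cls3: "\<forall>x\<in>Ehat. lh x = 0 \<longrightarrow> hc x = {x}"
  using cls[unfolded class_structure_def, THEN conjunct2, THEN conjunct2, THEN conjunct1] .

lemma cls4: "(\<exists>s<1. (\<lambda>k. lk (Suc k)) sums s) \<longrightarrow>
        countable {x\<in>Ehat. lh x = 0} \<and> infinite {x\<in>Ehat. lh x = 0}"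
  using cls[unfolded class_structure_def, THEN conjunct2, THEN conjunct2, THEN conjunct2, THEN conjunct1] .

lemma cls5: "(\<lambda>k. lk (Suc k)) sums 1 \<longrightarrow> {x\<in>Ehat. lh x = 0} = {}"
  using cls[unfolded class_structure_def, THEN conjunct2, THEN conjunct2, THEN conjunct2, THEN conjunct2] .

lemma lh0:
  assumes x: "x \<in> Ehat" and l: "lh x = 0" shows "x \<in> E" "lm x = 0"
proof -
  obtain y where y: "y \<in> E" "dhat x y < 1" using dense[OF x, of 1] by auto
  have yh: "y \<in> Ehat" using y E_sub by auto
  have "sh x y" using sh_iff[OF x yh] y by simp
  then have "y \<in> hc x" using yh unfolding hc_def' by simp
  moreover have "hc x = {x}" using cls3 x l by blast
  ultimately have "y = x" by simp
  then show "x \<in> E" "lm x = 0" using y lh_E l by auto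
qed

definition cc where "cc = (SOME c. (\<forall>k\<in>cK. c k \<in> Ehat \<and> lh (c k) = lk k \<and>
                    isometric_circle dhat (hc (c k)) (lk k)) \<and>
           inj_on (\<lambda>k. hc (c k)) cK \<and>
           (\<forall>x\<in>Ehat. lh x > 0 \<longrightarrow> (\<exists>k\<in>cK. x \<in> hc (c k))))"

lemma cc_all: "(\<forall>k\<in>cK. cc k \<in> Ehat \<and> lh (cc k) = lk k \<and>
                    isometric_circle dhat (hc (cc k)) (lk k)) \<and>
           inj_on (\<lambda>k. hc (cc k)) cK \<and>
           (\<forall>x\<in>Ehat. lh x > 0 \<longrightarrow> (\<exists>k\<in>cK. x \<in> hc (cc k)))"
  unfolding cc_def by (rule someI_ex[OF cls1])

lemma cc_props:
  "\<forall>k\<in>cK. cc k \<in> Ehat \<and> lh (cc k) = lk k"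
  "inj_on (\<lambda>k. hc (cc k)) cK"
  "\<forall>x\<in>Ehat. lh x > 0 \<longrightarrow> (\<exists>k\<in>cK. x \<in> hc (cc k))"
  using cc_all by auto

lemma hc_R: "k \<in> cK \<Longrightarrow> y \<in> hc (cc k) \<longleftrightarrow> R (cc k) y"
  using cc_props(1) sh_R unfolding hc_def' R_def by auto

lemma circle_of:
  assumes x: "x \<in> Ehat" and l: "lh x > 0"
  obtains k where "k \<in> cK" "R (cc k) x" "lh x = lk k"
proof -
  obtain k where k: "k \<in> cK" "x \<in> hc (cc k)" using cc_props(3) x l by blast
  have "R (cc k) x" using hc_R k by blast
  moreover have "lh x = lk k" using lh_R[OF \<open>R (cc k) x\<close>] cc_props(1) k by simp
  ultimately show ?thesis using that k by blast
qed

lemma circle_inj: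
  assumes k: "k \<in> cK" "k' \<in> cK" and R: "R (cc k) (cc k')" shows "k = k'"
proof -
  have "hc (cc k) = hc (cc k')"
    using hc_R k R R_trans R_sym by blast
  then show ?thesis using cc_props(2) k inj_on_def by metis
qed

end


context P55 begin

lemma ext3: "\<forall>x\<in>Ehat. \<forall>y\<in>Ehat. sh x y \<and> lh x > 0 \<longrightarrow>
        (\<exists>D. \<forall>xs\<in>seqs_to E dhat x. \<forall>ys\<in>seqs_to E dhat y.
          (\<lambda>n. cd (lm (xs n)) (Dl (xs n) (ys n) - D)) \<longlonglongrightarrow> 0)"
  using ext[unfolded extensions_exist_def, THEN conjunct2, THEN conjunct2] .

lemma Dh_prop:
  assumes R: "R x y" and L: "lh x > 0"
    and xs: "xs \<in> seqs_to E dhat x" and ys: "ys \<in> seqs_to E dhat y"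
  shows "(\<lambda>n. cd (lm (xs n)) (Dl (xs n) (ys n) - Dh x y)) \<longlonglongrightarrow> 0"
proof -
  have h: "x \<in> Ehat" "y \<in> Ehat" using R unfolding R_def by auto
  have "sh x y" using sh_R[OF h] R by simp
  then have "\<exists>D. \<forall>xs\<in>seqs_to E dhat x. \<forall>ys\<in>seqs_to E dhat y.
          (\<lambda>n. cd (lm (xs n)) (Dl (xs n) (ys n) - D)) \<longlonglongrightarrow> 0"
    using ext3 h L by blast
  from someI_ex[OF this] have "\<forall>xs\<in>seqs_to E dhat x. \<forall>ys\<in>seqs_to E dhat y.
          (\<lambda>n. cd (lm (xs n)) (Dl (xs n) (ys n) - Dh x y)) \<longlonglongrightarrow> 0"
    unfolding Deltahat_def .
  then show ?thesis using xs ys by blast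
qed

lemma R_ev:
  assumes R: "R x y" and xs: "xs \<in> seqs_to E dhat x" and ys: "ys \<in> seqs_to E dhat y"
  shows "eventually (\<lambda>n. V (xs n) (ys n)) sequentially"
proof -
  have h: "x \<in> Ehat" "y \<in> Ehat" "dhat x y < 1" using R unfolding R_def by auto
  have "eventually (\<lambda>n. dhat (xs n) (ys n) < 1) sequentially"
    using order_tendstoD(2)[OF d_lim[OF h(1,2) xs ys] h(3)] .
  then show ?thesis
  proof eventually_elim
    case (elim n)
    then show ?case using dE_iff[OF seqs_E[OF xs] seqs_E[OF ys]] by simp
  qed
qed

lemma d_Dh:
  assumes R: "R x y" and L: "lh x > 0"
  shows "dhat x y = cd (lh x) (Dh x y)"
proof -
  have h: "x \<in> Ehat" "y \<in> Ehat" using R unfolding R_def by auto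
  obtain xs ys where xs: "xs \<in> seqs_to E dhat x" and ys: "ys \<in> seqs_to E dhat y"
    using seqs_ex h by blast
  define L where "L = lh x"
  have L0: "L \<ge> 0" using L L_def by simp
  have t: "(\<lambda>n. cd (lm (xs n)) (Dl (xs n) (ys n) - Dh x y)) \<longlonglongrightarrow> 0"
    by (rule Dh_prop[OF R L xs ys])
  have ev: "eventually (\<lambda>n. lm (xs n) = L \<and> V (xs n) (ys n)) sequentially"
    using lh_ev[OF h(1) xs] R_ev[OF R xs ys] unfolding L_def by eventually_elim simp
  have "(\<lambda>n. cd L (Dl (xs n) (ys n)) - cd L (Dh x y)) \<longlonglongrightarrow> 0"
  proof (rule Lim_null_comparison[OF _ t])
    show "\<forall>\<^sub>F n in sequentially. norm (cd L (Dl (xs n) (ys n)) - cd L (Dh x y))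
            \<le> cd (lm (xs n)) (Dl (xs n) (ys n) - Dh x y)"
      using ev
    proof eventually_elim
      case (elim n)
      then show ?case using cd_lip[OF L0, of "Dl (xs n) (ys n)" "Dh x y"] by simp
    qed
  qed
  then have a: "(\<lambda>n. cd L (Dl (xs n) (ys n))) \<longlonglongrightarrow> cd L (Dh x y)"
    by (simp add: LIM_zero_iff)
  have "eventually (\<lambda>n. cd L (Dl (xs n) (ys n)) = dhat (xs n) (ys n)) sequentially"
    using ev
  proof eventually_elim
    case (elim n)
    then show ?case using d_E[OF seqs_E[OF xs] seqs_E[OF ys]] unfolding vdist_def by simp
  qed
  from Lim_transform_eventually[OF a this] have "(\<lambda>n. dhat (xs n) (ys n)) \<longlonglongrightarrow> cd L (Dh x y)" .
  with d_lim[OF h xs ys] show ?thesis unfolding L_def using LIMSEQ_unique by metis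
qed

lemma Dh_cocycle:
  assumes Rxy: "R x y" and Ryz: "R y z" and L: "lh x > 0"
  shows "cd (lh x) (Dh x z - Dh x y - Dh y z) = 0"
proof -
  have Rxz: "R x z" using R_trans[OF Rxy Ryz] .
  have h: "x \<in> Ehat" "y \<in> Ehat" "z \<in> Ehat" using Rxy Ryz unfolding R_def by auto
  define L where "L = lh x"
  have L0: "L > 0" using L L_def by simp
  have Ly: "lh y = L" using lh_R[OF Rxy] L_def by simp
  obtain xs ys zs where xs: "xs \<in> seqs_to E dhat x" and ys: "ys \<in> seqs_to E dhat y"
    and zs: "zs \<in> seqs_to E dhat z"
    using seqs_ex h by metis
  have t1: "(\<lambda>n. cd (lm (xs n)) (Dl (xs n) (ys n) - Dh x y)) \<longlonglongrightarrow> 0" by (rule Dh_prop[OF Rxy L xs ys])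
  have t2: "(\<lambda>n. cd (lm (ys n)) (Dl (ys n) (zs n) - Dh y z)) \<longlonglongrightarrow> 0"
    by (rule Dh_prop[OF Ryz _ ys zs]) (use Ly L0 in simp)
  have t3: "(\<lambda>n. cd (lm (xs n)) (Dl (xs n) (zs n) - Dh x z)) \<longlonglongrightarrow> 0" by (rule Dh_prop[OF Rxz L xs zs])
  have ev: "eventually (\<lambda>n. lm (xs n) = L \<and> lm (ys n) = L \<and> V (xs n) (ys n) \<and> V (ys n) (zs n)) sequentially"
    using lh_ev[OF h(1) xs] lh_ev[OF h(2) ys] R_ev[OF Rxy xs ys] R_ev[OF Ryz ys zs]
    unfolding L_def Ly[symmetric] by eventually_elim (simp add: Ly L_def)
  have le: "eventually (\<lambda>n. cd L (Dh x z - Dh x y - Dh y z) \<le>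
      cd (lm (xs n)) (Dl (xs n) (ys n) - Dh x y) + cd (lm (ys n)) (Dl (ys n) (zs n) - Dh y z)
      + cd (lm (xs n)) (Dl (xs n) (zs n) - Dh x z)) sequentially"
    using ev
  proof eventually_elim
    case (elim n)
    define a where "a = xs n" define b where "b = ys n" define c where "c = zs n"
    have ab: "V a b" "V b c" "lm a = L" "lm b = L" using elim a_def b_def c_def by auto
    obtain m where m: "Dl a c = Dl a b + Dl b c + of_int m * L"
      using Delta_cocycle[OF ab(1,2)] ab(3) L0 by auto
    have L00: "L \<ge> 0" using L0 by simp
    have "Dh x z - Dh x y - Dh y z = ((Dh x z - Dl a c) + (Dl a b - Dh x y) + (Dl b c - Dh y z)) + of_int m * L"
      using m by simp
    then have "cd L (Dh x z - Dh x y - Dh y z) = cd L ((Dh x z - Dl a c) + (Dl a b - Dh x y) + (Dl b c - Dh y z) + of_int m * L)"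
      by (rule arg_cong)
    also have "\<dots> = cd L ((Dh x z - Dl a c) + (Dl a b - Dh x y) + (Dl b c - Dh y z))"
      by (rule cd_period)
    also have "\<dots> \<le> cd L ((Dh x z - Dl a c) + (Dl a b - Dh x y)) + cd L (Dl b c - Dh y z)"
      by (rule cd_triangle[OF L00])
    also have "\<dots> \<le> cd L (Dh x z - Dl a c) + cd L (Dl a b - Dh x y) + cd L (Dl b c - Dh y z)"
      using cd_triangle[OF L00, of "Dh x z - Dl a c" "Dl a b - Dh x y"] by simp
    also have "cd L (Dh x z - Dl a c) = cd L (Dl a c - Dh x z)"
      using cd_neg[of L "Dl a c - Dh x z"] by simp
    finally show ?case using ab unfolding a_def b_def c_def by simp
  qed
  have "(\<lambda>n. cd (lm (xs n)) (Dl (xs n) (ys n) - Dh x y) + cd (lm (ys n)) (Dl (ys n) (zs n) - Dh y z)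
      + cd (lm (xs n)) (Dl (xs n) (zs n) - Dh x z)) \<longlonglongrightarrow> 0 + 0 + 0"
    by (intro tendsto_add t1 t2 t3)
  then have "cd L (Dh x z - Dh x y - Dh y z) \<le> 0"
    using tendsto_le[OF trivial_limit_sequentially _ tendsto_const le] by simp
  then show ?thesis using cd_nonneg[of L] L_def by (simp add: antisym)
qed

lemma Dh_self: assumes x: "x \<in> Ehat" and L: "lh x > 0" shows "cd (lh x) (Dh x x) = 0"
  using Dh_cocycle[OF R_refl[OF x] R_refl[OF x] L] cd_neg[of "lh x" "Dh x x"] by simp

lemma Dh_inj:
  assumes Rxy: "R x y" and Rxz: "R x z" and L: "lh x > 0"
    and c: "cd (lh x) (Dh x y - Dh x z) = 0"
  shows "y = z"
proof -
  have Ryz: "R y z" using R_trans[OF R_sym[OF Rxy] Rxz] .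
  have Ly: "lh y = lh x" using lh_R[OF Rxy] by simp
  have L0: "lh x \<ge> 0" using L by simp
  have h: "y \<in> Ehat" "z \<in> Ehat" using Ryz unfolding R_def by auto
  have "dhat y z = cd (lh x) (Dh y z)" using d_Dh[OF Ryz] Ly L by simp
  also have "\<dots> \<le> cd (lh x) (Dh y z - (Dh x z - Dh x y)) + cd (lh x) (Dh x z - Dh x y)"
    by (rule cd_diff_tri[OF L0])
  also have "cd (lh x) (Dh y z - (Dh x z - Dh x y)) = 0"
    using Dh_cocycle[OF Rxy Ryz L] cd_neg[of "lh x" "Dh x z - Dh x y - Dh y z"] by (simp add: algebra_simps)
  also have "cd (lh x) (Dh x z - Dh x y) = 0"
    using c cd_neg[of "lh x" "Dh x y - Dh x z"] by simp
  finally have "dhat y z \<le> 0" by simp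
  then have "dhat y z = 0" using d_nonneg by (simp add: antisym)
  then show ?thesis using d_zero h by simp
qed

lemma Dh_E:
  assumes x: "x \<in> E" and y: "y \<in> E" and V: "V x y" and L: "lm x > 0"
  shows "cd (lm x) (Dl x y - Dh x y) = 0"
proof -
  have R: "R x y" using R_E x y V by simp
  have Lh: "lh x > 0" using lh_E x L by simp
  have "(\<lambda>n. cd (lm x) (Dl x y - Dh x y)) \<longlonglongrightarrow> 0"
    using Dh_prop[OF R Lh const_seq[OF x] const_seq[OF y]] .
  then show ?thesis using LIMSEQ_unique[OF tendsto_const] by metis
qed

end


context P55 begin

lemma fl1: "\<forall>\<alpha>. bij_betw (S \<alpha>) Ehat Ehat \<and> (\<forall>x\<in>Ehat. \<forall>y\<in>Ehat. dhat (S \<alpha> x) (S \<alpha> y) = dhat x y)"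
  using flow[unfolded is_flow_def, THEN conjunct1] .
lemma fl2: "\<forall>\<alpha> \<beta>. \<forall>x\<in>Ehat. S (\<alpha> + \<beta>) x = S \<alpha> (S \<beta> x)"
  using flow[unfolded is_flow_def, THEN conjunct2, THEN conjunct1] .
lemma fl3: "\<forall>\<alpha>. \<forall>x\<in>Ehat. (lh x = 0 \<longrightarrow> S \<alpha> x = x) \<and>
        (lh x > 0 \<longrightarrow> sh x (S \<alpha> x) \<and> cd (lh x) (Dh x (S \<alpha> x) - \<alpha>) = 0)"
  using flow[unfolded is_flow_def, THEN conjunct2, THEN conjunct2] .

lemma S_in: "x \<in> Ehat \<Longrightarrow> S \<alpha> x \<in> Ehat"
  using fl1 bij_betw_apply by metis
lemma S_iso: "x \<in> Ehat \<Longrightarrow> y \<in> Ehat \<Longrightarrow> dhat (S \<alpha> x) (S \<alpha> y) = dhat x y"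
  using fl1 by blast
lemma S_add: "x \<in> Ehat \<Longrightarrow> S (\<alpha> + \<beta>) x = S \<alpha> (S \<beta> x)"
  using fl2 by blast
lemma S_fix: "x \<in> Ehat \<Longrightarrow> lh x = 0 \<Longrightarrow> S \<alpha> x = x"
  using fl3 by blast
lemma S_R: assumes "x \<in> Ehat" "lh x > 0" shows "R x (S \<alpha> x)"
proof -
  have "sh x (S \<alpha> x)" using fl3 assms by blast
  then show ?thesis using sh_R[OF assms(1) S_in[OF assms(1)]] by simp
qed
lemma S_Dh: "x \<in> Ehat \<Longrightarrow> lh x > 0 \<Longrightarrow> cd (lh x) (Dh x (S \<alpha> x) - \<alpha>) = 0"
  using fl3 by blast

lemma S_0: assumes x: "x \<in> Ehat" shows "S 0 x = x"
proof -
  have "S 0 (S 0 x) = S 0 x" using S_add[OF x, of 0 0] by simp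
  moreover have "inj_on (S 0) Ehat" using fl1 bij_betw_def by blast
  ultimately show ?thesis using S_in[OF x] x inj_on_def by metis
qed

lemma S_rep:
  assumes R: "R x y" and L: "lh x > 0" shows "y = S (Dh x y) x"
proof -
  have x: "x \<in> Ehat" using R unfolding R_def by simp
  have "cd (lh x) (Dh x y - Dh x (S (Dh x y) x)) = 0"
    using S_Dh[OF x L, of "Dh x y"] cd_neg[of "lh x" "Dh x (S (Dh x y) x) - Dh x y"] by simp
  then show ?thesis using Dh_inj[OF R S_R[OF x L] L] by simp
qed

lemma S_per:
  assumes x: "x \<in> Ehat" and L: "lh x > 0" shows "S (lh x) x = x"
proof -
  let ?L = "lh x" let ?z = "S ?L x"
  have L0: "?L \<ge> 0" using L by simp
  have a: "cd ?L (Dh x ?z - ?L) = 0" using S_Dh[OF x L] .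
  have b: "cd ?L (?L - Dh x x) = 0"
    using Dh_self[OF x L] cd_neg[of ?L "Dh x x"] cd_period[of ?L "- Dh x x" 1] by simp
  have "cd ?L (Dh x ?z - Dh x x) \<le> cd ?L (Dh x ?z - ?L) + cd ?L (?L - Dh x x)"
    using cd_triangle[OF L0, of "Dh x ?z - ?L" "?L - Dh x x"] by simp
  then have "cd ?L (Dh x ?z - Dh x x) = 0" using a b cd_nonneg[of ?L] by (simp add: antisym)
  then show ?thesis using Dh_inj[OF S_R[OF x L] R_refl[OF x] L] by simp
qed

abbreviation "ch \<equiv> contin_hat Ehat dhat"
abbreviation "isx \<equiv> is_ext E Ehat dhat"
abbreviation "vc \<equiv> vcont E Ehat dhat"
abbreviation "fh \<equiv> fhat E Ehat dhat"
abbreviation "Tf \<equiv> Tflow E Ehat dhat S"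
abbreviation "hU \<equiv> has_U E Ehat dhat S"
abbreviation "eig \<equiv> eigenspace E Ehat dhat S"

lemma ext_unique:
  assumes g1: "ch g1" and g2: "ch g2" and eq: "\<forall>x\<in>E. g1 x = g2 x" and x: "x \<in> Ehat"
  shows "g1 x = g2 x"
proof (rule ccontr)
  assume ne: "g1 x \<noteq> g2 x"
  define e where "e = cmod (g1 x - g2 x) / 2"
  have e: "e > 0" using ne unfolding e_def by simp
  obtain d1 where d1: "d1 > 0" "\<forall>y\<in>Ehat. dhat x y < d1 \<longrightarrow> cmod (g1 y - g1 x) < e"
    using g1 x e unfolding contin_hat_def by blast
  obtain d2 where d2: "d2 > 0" "\<forall>y\<in>Ehat. dhat x y < d2 \<longrightarrow> cmod (g2 y - g2 x) < e"
    using g2 x e unfolding contin_hat_def by blast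
  obtain y where y: "y \<in> E" "dhat x y < min d1 d2" using dense[OF x, of "min d1 d2"] d1 d2 by auto
  have yh: "y \<in> Ehat" using y E_sub by auto
  have a: "cmod (g1 y - g1 x) < e" "cmod (g2 y - g2 x) < e" using d1 d2 y yh by auto
  have "g1 x - g2 x = (g2 y - g2 x) - (g1 y - g1 x)" using eq y by simp
  then have "cmod (g1 x - g2 x) \<le> cmod (g2 y - g2 x) + cmod (g1 y - g1 x)"
    by (metis norm_triangle_ineq4)
  then show False using a unfolding e_def by simp
qed

lemma fh_ext: assumes "isx f g" "x \<in> Ehat" shows "fh f x = g x"
proof -
  have "\<exists>g. isx f g" using assms by blast
  then have "isx f (fh f)" unfolding fhat_def by (rule someI_ex)
  then show ?thesis using ext_unique[of "fh f" g x] assms unfolding is_ext_def by auto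
qed

lemma fh_isx: assumes "vc f" shows "isx f (fh f)"
proof -
  from assms have "\<exists>g. isx f g" unfolding vcont_def .
  then show ?thesis unfolding fhat_def by (rule someI_ex)
qed

lemma ch_scale: assumes "ch g" shows "ch (\<lambda>x. c * g x)"
  unfolding contin_hat_def
proof (intro ballI allI impI)
  fix x e assume x: "x \<in> Ehat" and e: "(e::real) > 0"
  have cp: "cmod c + 1 > 0" by (smt (verit) norm_ge_zero)
  have e': "e / (cmod c + 1) > 0" using e cp by (rule divide_pos_pos)
  obtain d where d: "d > 0" "\<forall>y\<in>Ehat. dhat x y < d \<longrightarrow> cmod (g y - g x) < e / (cmod c + 1)"
    using assms x e' unfolding contin_hat_def by blast
  show "\<exists>\<delta>>0. \<forall>y\<in>Ehat. dhat x y < \<delta> \<longrightarrow> cmod (c * g y - c * g x) < e"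
  proof (intro exI[of _ d] conjI ballI impI)
    fix y assume "y \<in> Ehat" "dhat x y < d"
    then have h: "cmod (g y - g x) < e / (cmod c + 1)" using d by blast
    have "cmod (c * g y - c * g x) = cmod c * cmod (g y - g x)"
      by (simp add: norm_mult[symmetric] right_diff_distrib)
    also have "\<dots> \<le> (cmod c + 1) * cmod (g y - g x)" by (simp add: mult_right_mono)
    also have "\<dots> < (cmod c + 1) * (e / (cmod c + 1))"
      using h cp by (intro mult_strict_left_mono) auto
    also have "\<dots> = e" using cp by simp
    finally show "cmod (c * g y - c * g x) < e" .
  qed (use d in simp)
qed

lemma Tf_fh:
  assumes f: "vc f" and x: "x \<in> Ehat"
  shows "fh (Tf \<alpha> f) x = fh f (S \<alpha> x)"
proof -
  have F: "isx f (fh f)" by (rule fh_isx[OF f])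
  have "isx (Tf \<alpha> f) (\<lambda>x. fh f (S \<alpha> x))"
    unfolding is_ext_def
  proof
    show "ch (\<lambda>x. fh f (S \<alpha> x))" unfolding contin_hat_def
    proof (intro ballI allI impI)
      fix z e assume z: "z \<in> Ehat" and e: "(e::real) > 0"
      obtain d where d: "d > 0" "\<forall>y\<in>Ehat. dhat (S \<alpha> z) y < d \<longrightarrow> cmod (fh f y - fh f (S \<alpha> z)) < e"
        using F S_in[OF z] e unfolding is_ext_def contin_hat_def by blast
      show "\<exists>\<delta>>0. \<forall>y\<in>Ehat. dhat z y < \<delta> \<longrightarrow> cmod (fh f (S \<alpha> y) - fh f (S \<alpha> z)) < e"
        using d S_iso[OF z] S_in by (intro exI[of _ d]) auto
    qed
    show "\<forall>x\<in>E. fh f (S \<alpha> x) = Tf \<alpha> f x" unfolding Tflow_def by simp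
  qed
  then show ?thesis using fh_ext x by blast
qed

lemma eig_quot:
  assumes f: "f \<in> eig b"
  shows "isx f (fh f)" "\<And>x. x \<in> Ehat \<Longrightarrow> ((\<lambda>\<alpha>. (fh f (S \<alpha> x) - fh f x) / complex_of_real \<alpha>) \<longlongrightarrow> b * fh f x) (at 0)"
proof -
  obtain u where u: "hU f u" "\<forall>x\<in>E. u x = b * f x" using f unfolding eigenspace_def by blast
  have vf: "vc f" and vu: "vc u" using u unfolding has_U_def by auto
  show F: "isx f (fh f)" by (rule fh_isx[OF vf])
  have "isx u (\<lambda>x. b * fh f x)"
    unfolding is_ext_def using ch_scale[of "fh f" b] F u(2) unfolding is_ext_def by auto
  then have Ueq: "fh u x = b * fh f x" if "x \<in> Ehat" for x using fh_ext that by blast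
  fix x assume x: "x \<in> Ehat"
  have "((\<lambda>\<alpha>. (fh (Tf \<alpha> f) x - fh f x) / complex_of_real \<alpha>) \<longlongrightarrow> fh u x) (at 0)"
    using u(1) x unfolding has_U_def by blast
  then show "((\<lambda>\<alpha>. (fh f (S \<alpha> x) - fh f x) / complex_of_real \<alpha>) \<longlongrightarrow> b * fh f x) (at 0)"
    using Tf_fh[OF vf x] Ueq[OF x] by simp
qed

lemma eig_orbit:
  assumes f: "f \<in> eig b" and x: "x \<in> Ehat"
  shows "fh f (S t x) = exp (b * of_real t) * fh f x"
proof -
  define g where "g t = fh f (S t x)" for t
  have "((\<lambda>h. (g (t + h) - g t) / complex_of_real h) \<longlongrightarrow> b * g t) (at 0)" for t
  proof -
    have "((\<lambda>h. (fh f (S h (S t x)) - fh f (S t x)) / complex_of_real h) \<longlongrightarrow> b * fh f (S t x)) (at 0)"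
      using eig_quot(2)[OF f S_in[OF x]] .
    moreover have "S h (S t x) = S (t + h) x" for h using S_add[OF x, of h t] by (simp add: add.commute)
    ultimately show ?thesis unfolding g_def by simp
  qed
  then have "g t = exp (b * of_real t) * g 0" by (rule ode_exp)
  then show ?thesis unfolding g_def using S_0[OF x] by simp
qed

end


context P55 begin

definition Pa where "Pa a f \<longleftrightarrow> (\<forall>x\<in>E. \<forall>y\<in>E. V x y \<longrightarrow> f y = f x * exp (\<i> * complex_of_real (a * Dl x y)))"
definition Qa where "Qa a f \<longleftrightarrow> (\<forall>x\<in>E. lm x > 0 \<and> f x \<noteq> 0 \<longrightarrow> exp (\<i> * complex_of_real (a * lm x)) = 1)"
definition Za where "Za a f \<longleftrightarrow> (a \<noteq> 0 \<longrightarrow> (\<forall>x\<in>E. lm x = 0 \<longrightarrow> f x = 0))"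

lemma eig_FE: "f \<in> eig b \<Longrightarrow> f \<in> FE E" unfolding eigenspace_def by simp

lemma eig_on_E: "f \<in> eig b \<Longrightarrow> x \<in> E \<Longrightarrow> fh f x = f x"
  using eig_quot(1) unfolding is_ext_def by simp

lemma eig_fixed:
  assumes f: "f \<in> eig b" and x: "x \<in> E" and l: "lm x = 0" shows "b * f x = 0"
proof -
  have xh: "x \<in> Ehat" using x E_sub by auto
  have "lh x = 0" using lh_E x l by simp
  then have "S \<alpha> x = x" for \<alpha> using S_fix xh by simp
  then have "((\<lambda>\<alpha>. 0) \<longlongrightarrow> b * fh f x) (at (0::real))"
    using eig_quot(2)[OF f xh] by simp
  then have "b * fh f x = 0" using LIM_const_eq by metis
  then show ?thesis using eig_on_E[OF f x] by simp
qed

lemma eig_per: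
  assumes f: "f \<in> eig b" and x: "x \<in> E" and l: "lm x > 0"
  shows "exp (b * of_real (lm x)) * f x = f x"
proof -
  have xh: "x \<in> Ehat" using x E_sub by auto
  have L: "lh x = lm x" using lh_E x by simp
  have "fh f (S (lh x) x) = exp (b * of_real (lh x)) * fh f x" by (rule eig_orbit[OF f xh])
  then show ?thesis using S_per[OF xh] L l eig_on_E[OF f x] by simp
qed

lemma eig_cls:
  assumes f: "f \<in> eig b" and x: "x \<in> E" and y: "y \<in> E" and V: "V x y" and l: "lm x > 0"
  shows "f y = exp (b * of_real (Dh x y)) * f x"
proof -
  have xh: "x \<in> Ehat" using x E_sub by auto
  have L: "lh x > 0" using lh_E x l by simp
  have R: "R x y" using R_E x y V by simp
  have "fh f (S (Dh x y) x) = exp (b * of_real (Dh x y)) * fh f x" by (rule eig_orbit[OF f xh])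
  then show ?thesis using S_rep[OF R L] eig_on_E[OF f x] eig_on_E[OF f y] by simp
qed

lemma exp_ia: "exp (\<i> * complex_of_real a * complex_of_real t) = exp (\<i> * complex_of_real (a * t))"
  by (simp add: mult.assoc)

lemma eig_sub:
  assumes f: "f \<in> eig (\<i> * of_real a)"
  shows "f \<in> FE E" "Pa a f" "Qa a f" "Za a f"
proof -
  show "f \<in> FE E" by (rule eig_FE[OF f])
  show Q: "Qa a f" unfolding Qa_def
  proof (intro ballI impI)
    fix x assume x: "x \<in> E" and h: "lm x > 0 \<and> f x \<noteq> 0"
    have "exp (\<i> * of_real a * of_real (lm x)) * f x = f x" using eig_per[OF f x] h by simp
    then show "exp (\<i> * complex_of_real (a * lm x)) = 1" using h exp_ia by simp
  qed
  show "Za a f" unfolding Za_def using eig_fixed[OF f] by auto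
  show "Pa a f" unfolding Pa_def
  proof (intro ballI impI)
    fix x y assume x: "x \<in> E" and y: "y \<in> E" and V: "V x y"
    show "f y = f x * exp (\<i> * complex_of_real (a * Dl x y))"
    proof (cases "lm x > 0")
      case False
      then have "lm x = 0" using lam_bnd x by force
      then have "y = x" using lam_zero_fixed x V by blast
      then show ?thesis using Delta_self by simp
    next
      case True
      have fy: "f y = exp (\<i> * complex_of_real (a * Dh x y)) * f x"
        using eig_cls[OF f x y V True] exp_ia by simp
      show ?thesis
      proof (cases "f x = 0")
        case True then show ?thesis using fy by simp
      next
        case False
        have e: "exp (\<i> * complex_of_real (a * lm x)) = 1" using Q x True False unfolding Qa_def by blast
        have "cd (lm x) (Dh x y - Dl x y) = 0"
          using Dh_E[OF x y V True] cd_neg[of "lm x" "Dl x y - Dh x y"] by simp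
        then have "exp (\<i> * complex_of_real (a * Dh x y)) = exp (\<i> * complex_of_real (a * Dl x y))"
          using exp_cd0[OF _ e] True by simp
        then show ?thesis using fy by simp
      qed
    qed
  qed
qed

end


context P55 begin

abbreviation "ea a t \<equiv> exp (\<i> * complex_of_real (a * t))"

lemma ea_add: "ea a (s + t) = ea a s * ea a t"
  by (simp add: distrib_left exp_add[symmetric])

definition pick where "pick z = (SOME x. x \<in> E \<and> dhat z x < 1)"

lemma pick: assumes z: "z \<in> Ehat" shows "pick z \<in> E" "R z (pick z)"
proof -
  have "\<exists>x. x \<in> E \<and> dhat z x < 1" using dense[OF z, of 1] by auto
  then have p: "pick z \<in> E \<and> dhat z (pick z) < 1" unfolding pick_def by (rule someI_ex)
  then show "pick z \<in> E" by simp
  show "R z (pick z)" using p z E_sub unfolding R_def by auto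
qed

definition gext where "gext a f z = (if z \<in> Ehat then
   (if lm (pick z) > 0 then f (pick z) * ea a (Dh (pick z) z) else f (pick z)) else 0)"

lemma G1:
  assumes P: "Pa a f" and Q: "Qa a f" and z: "z \<in> Ehat" and x': "x' \<in> E" and Rz: "R z x'"
    and l: "lm x' > 0"
  shows "gext a f z = f x' * ea a (Dh x' z)"
proof -
  define x where "x = pick z"
  have x: "x \<in> E" "R z x" using pick[OF z] x_def by auto
  have Rxx': "R x x'" using R_trans[OF R_sym[OF x(2)] Rz] .
  have V: "V x x'" using R_E x(1) x' Rxx' by simp
  have lx: "lm x = lm x'" using lam_cls[OF V] .
  have lx0: "lm x > 0" using lx l by simp
  have g: "gext a f z = f x * ea a (Dh x z)" unfolding gext_def x_def[symmetric] using z lx0 by simp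
  have fx': "f x' = f x * ea a (Dl x x')" using P x(1) x' V unfolding Pa_def by blast
  show ?thesis
  proof (cases "f x = 0")
    case True then show ?thesis using g fx' by simp
  next
    case False
    let ?L = "lm x"
    have e: "ea a ?L = 1" using Q x(1) lx0 False unfolding Qa_def by blast
    have L0: "?L \<ge> 0" using lx0 by simp
    have lhx: "lh x = ?L" using lh_E x(1) by simp
    have c1: "cd ?L (Dh x z - Dh x x' - Dh x' z) = 0"
      using Dh_cocycle[OF Rxx' R_sym[OF Rz]] lhx lx0 by simp
    have c2: "cd ?L (Dh x x' - Dl x x') = 0"
      using Dh_E[OF x(1) x' V lx0] cd_neg[of ?L "Dl x x' - Dh x x'"] by simp
    have eq: "Dh x z - (Dl x x' + Dh x' z) = (Dh x z - Dh x x' - Dh x' z) + (Dh x x' - Dl x x')" by simp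
    have "cd ?L (Dh x z - (Dl x x' + Dh x' z)) \<le> cd ?L (Dh x z - Dh x x' - Dh x' z) + cd ?L (Dh x x' - Dl x x')"
      unfolding eq by (rule cd_triangle[OF L0])
    then have "cd ?L (Dh x z - (Dl x x' + Dh x' z)) = 0" using c1 c2 cd_nonneg[of ?L] by (simp add: antisym)
    then have "ea a (Dh x z) = ea a (Dl x x' + Dh x' z)" using exp_cd0[OF L0 e] by blast
    then have "ea a (Dh x z) = ea a (Dl x x') * ea a (Dh x' z)" using ea_add by simp
    then show ?thesis using g fx' by simp
  qed
qed

lemma G_fix:
  assumes z: "z \<in> Ehat" and l: "lh z = 0" shows "gext a f z = f z"
proof -
  have zE: "z \<in> E" "lm z = 0" using lh0[OF z l] by auto
  have x: "pick z \<in> E" "R z (pick z)" using pick[OF z] by auto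
  have "V z (pick z)" using R_E zE(1) x by simp
  then have "pick z = z" using lam_zero_fixed zE by blast
  then show ?thesis unfolding gext_def using z zE by simp
qed

lemma G_E:
  assumes P: "Pa a f" and Q: "Qa a f" and z: "z \<in> E" shows "gext a f z = f z"
proof (cases "lm z > 0")
  case False
  then have "lm z = 0" using lam_bnd z by force
  then show ?thesis using G_fix E_sub z lh_E by auto
next
  case True
  have zh: "z \<in> Ehat" using z E_sub by auto
  have g: "gext a f z = f z * ea a (Dh z z)" using G1[OF P Q zh z R_refl[OF zh] True] .
  show ?thesis
  proof (cases "f z = 0")
    case True then show ?thesis using g by simp
  next
    case False
    have e: "ea a (lm z) = 1" using Q z True False unfolding Qa_def by blast
    have "cd (lm z) (Dh z z - 0) = 0" using Dh_self[OF zh] lh_E[OF z] True by simp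
    then have "ea a (Dh z z) = ea a 0" using exp_cd0[OF _ e] True by (meson less_imp_le)
    then show ?thesis using g by simp
  qed
qed

lemma near_E:
  assumes z: "z \<in> Ehat" and l: "lh z > 0"
  obtains x' where "x' \<in> E" "R z x'" "lm x' = lh z"
proof -
  obtain x' where x': "x' \<in> E" "dhat z x' < 1" using dense[OF z, of 1] by auto
  have "R z x'" using x' z E_sub unfolding R_def by auto
  moreover have "lm x' = lh z" using lh_near[OF z x'(1,2)] by simp
  ultimately show ?thesis using that x' by blast
qed

lemma G_cont:
  assumes P: "Pa a f" and Q: "Qa a f" shows "ch (gext a f)"
  unfolding contin_hat_def
proof (intro ballI allI impI)
  fix z e assume z: "z \<in> Ehat" and e: "(e::real) > 0"
  show "\<exists>\<delta>>0. \<forall>y\<in>Ehat. dhat z y < \<delta> \<longrightarrow> cmod (gext a f y - gext a f z) < e"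
  proof (cases "lh z > 0")
    case False
    then have l: "lh z = 0" using lh_bnd[OF z] by force
    show ?thesis
    proof (intro exI[of _ 1] conjI ballI impI)
      fix y assume y: "y \<in> Ehat" "dhat z y < 1"
      have "sh z y" using sh_iff(1)[OF z y(1)] y by simp
      then have "y \<in> hc z" using y unfolding hc_def' by simp
      then have "y = z" using cls3 z l by blast
      then show "cmod (gext a f y - gext a f z) < e" using e by simp
    qed simp
  next
    case True
    obtain x' where x': "x' \<in> E" "R z x'" "lm x' = lh z" using near_E[OF z True] by blast
    define L where "L = lm x'"
    have L0: "L > 0" using x' True L_def by simp
    define K where "K = cmod (f x') * \<bar>a\<bar> + 1"
    have K: "K > 0" unfolding K_def by (smt (verit) norm_ge_zero zero_le_mult_iff abs_ge_zero)
    show ?thesis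
    proof (intro exI[of _ "min 1 (e / K)"] conjI ballI impI)
      show "min 1 (e / K) > 0" using e K by simp
      fix y assume y: "y \<in> Ehat" "dhat z y < min 1 (e / K)"
      have Rzy: "R z y" using y z unfolding R_def by simp
      have Ryx: "R y x'" using R_trans[OF R_sym[OF Rzy] x'(2)] .
      have gy: "gext a f y = f x' * ea a (Dh x' y)" using G1[OF P Q y(1) x'(1) Ryx] x' True by simp
      have gz: "gext a f z = f x' * ea a (Dh x' z)" using G1[OF P Q z x'(1) x'(2)] x' True by simp
      show "cmod (gext a f y - gext a f z) < e"
      proof (cases "f x' = 0")
        case True then show ?thesis using gy gz e by simp
      next
        case False
        have e1: "ea a L = 1" using Q x'(1) L0 False unfolding Qa_def L_def by blast
        have lx': "lh x' = L" using lh_E x'(1) L_def by simp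
        have c1: "cd L (Dh x' y - Dh x' z - Dh z y) = 0"
          using Dh_cocycle[OF R_sym[OF x'(2)] Rzy] lx' L0 by simp
        have dz: "dhat z y = cd L (Dh z y)" using d_Dh[OF Rzy] True x'(3) L_def by simp
        have "cd L (Dh x' y - Dh x' z) \<le> cd L (Dh x' y - Dh x' z - Dh z y) + cd L (Dh z y)"
          using cd_diff_tri[of L "Dh x' y - Dh x' z" "Dh z y"] L0 by simp
        then have cdle: "cd L (Dh x' y - Dh x' z) \<le> dhat z y" using c1 dz by simp
        have "cmod (gext a f y - gext a f z) = cmod (f x') * cmod (ea a (Dh x' y) - ea a (Dh x' z))"
          using gy gz by (simp add: norm_mult[symmetric] right_diff_distrib)
        also have "\<dots> \<le> cmod (f x') * (\<bar>a\<bar> * cd L (Dh x' y - Dh x' z))"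
          using exp_cd[of L a "Dh x' y" "Dh x' z"] e1 L0 by (intro mult_left_mono) auto
        also have "\<dots> \<le> cmod (f x') * (\<bar>a\<bar> * dhat z y)"
          using cdle by (intro mult_left_mono) auto
        also have "\<dots> \<le> K * dhat z y" unfolding K_def using d_nonneg[of z y]
          by (simp add: algebra_simps)
        also have "\<dots> < K * (e / K)" using y K by (intro mult_strict_left_mono) auto
        also have "\<dots> = e" using K by simp
        finally show ?thesis .
      qed
    qed
  qed
qed

lemma G_deriv:
  assumes P: "Pa a f" and Q: "Qa a f" and Z: "Za a f" and z: "z \<in> Ehat"
  shows "((\<lambda>h. (gext a f (S h z) - gext a f z) / complex_of_real h) \<longlongrightarrow> (\<i> * of_real a) * gext a f z) (at 0)"
proof (cases "lh z > 0")
  case False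
  then have l: "lh z = 0" using lh_bnd[OF z] by force
  have zE: "z \<in> E" "lm z = 0" using lh0[OF z l] by auto
  have g: "gext a f z = f z" using G_fix[OF z l] .
  have r0: "(\<i> * of_real a) * gext a f z = 0"
  proof (cases "a = 0")
    case False then show ?thesis using Z zE g unfolding Za_def by simp
  qed simp
  have "S h z = z" for h using S_fix[OF z l] .
  then have "(\<lambda>h. (gext a f (S h z) - gext a f z) / complex_of_real h) = (\<lambda>h. 0)" by simp
  then show ?thesis unfolding r0 by simp
next
  case True
  obtain x' where x': "x' \<in> E" "R z x'" "lm x' = lh z" using near_E[OF z True] by blast
  define L where "L = lm x'"
  have L0: "L > 0" using x' True L_def by simp
  have gz: "gext a f z = f x' * ea a (Dh x' z)" using G1[OF P Q z x'(1) x'(2)] x' True by simp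
  have key: "gext a f (S h z) = gext a f z * ea a h" for h
  proof -
    define w where "w = S h z"
    have w: "w \<in> Ehat" "R z w" using S_in[OF z] S_R[OF z True] w_def by auto
    have Rwx: "R w x'" using R_trans[OF R_sym[OF w(2)] x'(2)] .
    have gw: "gext a f w = f x' * ea a (Dh x' w)" using G1[OF P Q w(1) x'(1) Rwx] x' True by simp
    show ?thesis
    proof (cases "f x' = 0")
      case True then show ?thesis using gw gz w_def by simp
    next
      case False
      have e1: "ea a L = 1" using Q x'(1) L0 False unfolding Qa_def L_def by blast
      have lx': "lh x' = L" using lh_E x'(1) L_def by simp
      have c1: "cd L (Dh x' w - Dh x' z - Dh z w) = 0"
        using Dh_cocycle[OF R_sym[OF x'(2)] w(2)] lx' L0 by simp
      have c2: "cd L (Dh z w - h) = 0" using S_Dh[OF z True, of h] x'(3) L_def w_def by simp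
      have eq: "Dh x' w - (Dh x' z + h) = (Dh x' w - Dh x' z - Dh z w) + (Dh z w - h)" by simp
      have "cd L (Dh x' w - (Dh x' z + h)) \<le> cd L (Dh x' w - Dh x' z - Dh z w) + cd L (Dh z w - h)"
        unfolding eq by (rule cd_triangle) (use L0 in simp)
      then have "cd L (Dh x' w - (Dh x' z + h)) = 0" using c1 c2 cd_nonneg[of L] by (simp add: antisym)
      then have "ea a (Dh x' w) = ea a (Dh x' z + h)" using exp_cd0[of L a] e1 L0 by simp
      then show ?thesis using gw gz ea_add w_def by simp
    qed
  qed
  have "((\<lambda>h. (exp ((\<i> * of_real a) * complex_of_real h) - 1) / complex_of_real h) \<longlongrightarrow> \<i> * of_real a) (at 0)"
    by (rule exp_quot)
  then have "((\<lambda>h. gext a f z * ((exp ((\<i> * of_real a) * complex_of_real h) - 1) / complex_of_real h))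
      \<longlongrightarrow> gext a f z * (\<i> * of_real a)) (at 0)"
    by (intro tendsto_intros)
  moreover have "(\<lambda>h. gext a f z * ((exp ((\<i> * of_real a) * complex_of_real h) - 1) / complex_of_real h))
      = (\<lambda>h. (gext a f (S h z) - gext a f z) / complex_of_real h)"
  proof
    fix h
    have k2: "gext a f (S h z) - gext a f z = gext a f z * (exp ((\<i> * of_real a) * complex_of_real h) - 1)"
      using key[of h] exp_ia[of a h] by (simp add: algebra_simps)
    show "gext a f z * ((exp ((\<i> * of_real a) * complex_of_real h) - 1) / complex_of_real h)
      = (gext a f (S h z) - gext a f z) / complex_of_real h"
      unfolding k2 by (simp only: times_divide_eq_right)
  qed
  ultimately show ?thesis by (simp add: mult.commute)
qed

lemma eig_construct:
  assumes f: "f \<in> FE E" and P: "Pa a f" and Q: "Qa a f" and Z: "Za a f"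
  shows "f \<in> eig (\<i> * of_real a)"
proof -
  define g where "g = gext a f"
  have xf: "isx f g" unfolding is_ext_def g_def using G_cont[OF P Q] G_E[OF P Q] by auto
  have vf: "vc f" using xf unfolding vcont_def by blast
  have fg: "fh f x = g x" if "x \<in> Ehat" for x using fh_ext[OF xf that] .
  define u where "u x = (if x \<in> E then (\<i> * of_real a) * f x else 0)" for x
  have xu: "isx u (\<lambda>x. (\<i> * of_real a) * g x)"
    unfolding is_ext_def using ch_scale[of g] xf unfolding is_ext_def u_def by auto
  have vu: "vc u" using xu unfolding vcont_def by blast
  have ug: "fh u x = (\<i> * of_real a) * g x" if "x \<in> Ehat" for x using fh_ext[OF xu that] .
  have "hU f u" unfolding has_U_def
  proof (intro conjI ballI)
    show "vc f" "vc u" by (fact vf, fact vu)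
    fix x assume x: "x \<in> Ehat"
    have "((\<lambda>h. (g (S h x) - g x) / complex_of_real h) \<longlongrightarrow> (\<i> * of_real a) * g x) (at 0)"
      unfolding g_def by (rule G_deriv[OF P Q Z x])
    moreover have "fh (Tf h f) x = g (S h x)" for h using Tf_fh[OF vf x] fg S_in[OF x] by simp
    ultimately show "((\<lambda>\<alpha>. (fh (Tf \<alpha> f) x - fh f x) / complex_of_real \<alpha>) \<longlongrightarrow> fh u x) (at 0)"
      using fg[OF x] ug[OF x] by simp
  qed
  moreover have "\<forall>x\<in>E. u x = (\<i> * of_real a) * f x" unfolding u_def by simp
  ultimately show ?thesis using f unfolding eigenspace_def by blast
qed

lemma eig_char: "eig (\<i> * of_real a) = {f \<in> FE E. Pa a f \<and> Qa a f \<and> Za a f}"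
  using eig_sub eig_construct by blast

end


context P55 begin

lemma lamk_nonneg: assumes k: "k \<ge> 1" shows "0 \<le> lk k"
proof -
  let ?A = "{Min (lm ` set xs) | xs. length xs = k \<and> set xs \<subseteq> E \<and>
        (\<forall>i<k. \<forall>j<k. i \<noteq> j \<longrightarrow> \<not> V (xs ! i) (xs ! j))}"
  have "bdd_above ({0} \<union> ?A)"
  proof (rule bdd_aboveI[of _ 1])
    fix t assume "t \<in> {0} \<union> ?A"
    then show "t \<le> 1"
    proof
      assume "t \<in> ?A"
      then obtain xs where xs: "t = Min (lm ` set xs)" "length xs = k" "set xs \<subseteq> E" by blast
      have "xs \<noteq> []" using xs k by auto
      then obtain x0 where x0: "x0 \<in> set xs" by (cases xs) auto
      have "t \<le> lm x0" unfolding xs(1) using x0 by (intro Min_le) auto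
      also have "\<dots> \<le> 1" using lam_bnd x0 xs(3) by auto
      finally show "t \<le> 1" .
    qed simp
  qed
  then show ?thesis unfolding lamk_def by (intro cSup_upper) auto
qed

lemma mult_iff:
  assumes a: "a \<noteq> 0"
  shows "(\<exists>n::int. L = of_int n * (2 * pi / a)) \<longleftrightarrow> ea a L = 1"
proof -
  have "ea a L = 1 \<longleftrightarrow> (\<exists>n::int. a * L = of_int (2 * n) * pi)" unfolding exp_eq_1 by simp
  also have "\<dots> \<longleftrightarrow> (\<exists>n::int. L = of_int n * (2 * pi / a))"
  proof (intro iff_exI)
    fix n :: int
    show "a * L = of_int (2 * n) * pi \<longleftrightarrow> L = of_int n * (2 * pi / a)"
      using a by (auto simp: field_simps)
  qed
  finally show ?thesis by simp
qed

definition rep where "rep k = pick (cc k)"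

lemma rep_props:
  assumes k: "k \<in> cK" shows "rep k \<in> E" "R (cc k) (rep k)" "lm (rep k) = lk k"
proof -
  have c: "cc k \<in> Ehat" "lh (cc k) = lk k" using cc_props(1) k by auto
  show r: "rep k \<in> E" "R (cc k) (rep k)" using pick[OF c(1)] unfolding rep_def by auto
  have "dhat (cc k) (rep k) < 1" using r(2) unfolding R_def by simp
  then show "lm (rep k) = lk k" using lh_near[OF c(1) r(1)] c(2) by simp
qed

lemma rep_nV:
  assumes k: "k \<in> cK" "k' \<in> cK" "k \<noteq> k'" shows "\<not> V (rep k) (rep k')"
proof
  assume "V (rep k) (rep k')"
  then have "R (rep k) (rep k')" using R_E rep_props k by blast
  then have "R (cc k) (cc k')"
    using R_trans[OF R_trans[OF rep_props(2)[OF k(1)]] R_sym[OF rep_props(2)[OF k(2)]]] by blast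
  then show False using circle_inj k by blast
qed

lemma rep_inj: "inj_on rep cK"
proof (rule inj_onI)
  fix k k' assume k: "k \<in> cK" "k' \<in> cK" "rep k = rep k'"
  show "k = k'"
  proof (rule ccontr)
    assume "k \<noteq> k'"
    then have "\<not> V (rep k) (rep k')" using rep_nV k by blast
    moreover have "V (rep k) (rep k)" using vsim_refl[OF vp rep_props(1)[OF k(1)]] .
    ultimately show False using k(3) by simp
  qed
qed

lemma rep_cover:
  assumes y: "y \<in> E" and l: "lm y > 0"
  shows "\<exists>k\<in>cK. V (rep k) y \<and> lk k = lm y"
proof -
  have yh: "y \<in> Ehat" using y E_sub by auto
  have "lh y > 0" using lh_E y l by simp
  then obtain k where k: "k \<in> cK" "R (cc k) y" "lh y = lk k" using circle_of[OF yh] by blast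
  have "R (rep k) y" using R_trans[OF R_sym[OF rep_props(2)[OF k(1)]] k(2)] .
  then have "V (rep k) y" using R_E rep_props(1)[OF k(1)] y by simp
  then show ?thesis using k lh_E y by auto
qed

definition beta where "beta a x0 = (\<lambda>y. if V x0 y then ea a (Dl x0 y) else 0)"

lemma beta_self: "x0 \<in> E \<Longrightarrow> beta a x0 x0 = 1"
  unfolding beta_def using vsim_refl[OF vp] Delta_self by simp

lemma beta_nV: "\<not> V x0 y \<Longrightarrow> beta a x0 y = 0"
  unfolding beta_def by simp

definition cond where "cond a x \<longleftrightarrow> a = 0 \<or> (lm x > 0 \<and> ea a (lm x) = 1)"

lemma beta_eig:
  assumes x0: "x0 \<in> E" and c: "cond a x0"
  shows "beta a x0 \<in> eig (\<i> * of_real a)"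
proof (rule eig_construct)
  show "beta a x0 \<in> FE E" unfolding FE_def beta_def using vsim_E[OF vp] by auto
  show "Pa a (beta a x0)" unfolding Pa_def
  proof (intro ballI impI)
    fix x y assume x: "x \<in> E" and y: "y \<in> E" and V: "V x y"
    show "beta a x0 y = beta a x0 x * ea a (Dl x y)"
    proof (cases "V x0 x")
      case True
      have V0y: "V x0 y" using vsim_trans[OF vp True V] .
      have "ea a (Dl x0 y) = ea a (Dl x0 x) * ea a (Dl x y)"
      proof (cases "a = 0")
        case True then show ?thesis by simp
      next
        case False
        then have l: "lm x0 > 0" "ea a (lm x0) = 1" using c unfolding cond_def by auto
        obtain m where m: "Dl x0 y = Dl x0 x + Dl x y + of_int m * lm x0"
          using Delta_cocycle[OF True V l(1)] by blast
        have "ea a (of_int m * lm x0) = 1" using exp_int_mult_1[OF l(2)] by simp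
        then show ?thesis unfolding m ea_add by simp
      qed
      then show ?thesis unfolding beta_def using True V0y by simp
    next
      case False
      have "\<not> V x0 y" using False vsim_trans[OF vp _ vsim_sym[OF vp V]] by blast
      then show ?thesis unfolding beta_def using False by simp
    qed
  qed
  show "Qa a (beta a x0)" unfolding Qa_def
  proof (intro ballI impI)
    fix x assume x: "x \<in> E" and h: "lm x > 0 \<and> beta a x0 x \<noteq> 0"
    then have "V x0 x" unfolding beta_def by (auto split: if_splits)
    then have "lm x = lm x0" using lam_cls by simp
    then show "ea a (lm x) = 1" using c unfolding cond_def by auto
  qed
  show "Za a (beta a x0)" unfolding Za_def
  proof (intro impI ballI)
    fix x assume a: "a \<noteq> 0" and x: "x \<in> E" and l: "lm x = 0"
    show "beta a x0 x = 0"
    proof (rule ccontr)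
      assume "beta a x0 x \<noteq> 0"
      then have "V x0 x" unfolding beta_def by (auto split: if_splits)
      then have "lm x = lm x0" using lam_cls by simp
      then show False using c a l unfolding cond_def by simp
    qed
  qed
qed

lemma eig_lin:
  assumes B: "finite B" "B \<subseteq> eig (\<i> * of_real a)"
  shows "(\<lambda>y. \<Sum>b\<in>B. c b * b y) \<in> eig (\<i> * of_real a)"
proof -
  have Bc: "\<And>b. b \<in> B \<Longrightarrow> b \<in> FE E \<and> Pa a b \<and> Qa a b \<and> Za a b" using B(2) eig_char by blast
  let ?g = "\<lambda>y. \<Sum>b\<in>B. c b * b y"
  show ?thesis unfolding eig_char
  proof (intro CollectI conjI)
    show "?g \<in> FE E" unfolding FE_def
    proof (intro CollectI allI impI)
      fix x assume "x \<notin> E"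
      then have "\<forall>b\<in>B. b x = 0" using Bc unfolding FE_def by blast
      then show "?g x = 0" by (intro sum.neutral) simp
    qed
    show "Pa a ?g" unfolding Pa_def
    proof (intro ballI impI)
      fix x y assume x: "x \<in> E" and y: "y \<in> E" and V: "V x y"
      have "?g y = (\<Sum>b\<in>B. c b * (b x * ea a (Dl x y)))"
        using Bc x y V unfolding Pa_def by (intro sum.cong) auto
      also have "\<dots> = ?g x * ea a (Dl x y)" by (simp add: sum_distrib_right mult.assoc)
      finally show "?g y = ?g x * ea a (Dl x y)" .
    qed
    show "Qa a ?g" unfolding Qa_def
    proof (intro ballI impI)
      fix x assume x: "x \<in> E" and h: "lm x > 0 \<and> ?g x \<noteq> 0"
      have "\<not> (\<forall>b\<in>B. c b * b x = 0)"
      proof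
        assume "\<forall>b\<in>B. c b * b x = 0"
        then have "?g x = 0" by (intro sum.neutral) simp
        then show False using h by simp
      qed
      then obtain b where b: "b \<in> B" "c b * b x \<noteq> 0" by blast
      then show "ea a (lm x) = 1" using Bc[OF b(1)] x h unfolding Qa_def by auto
    qed
    show "Za a ?g" unfolding Za_def
    proof (intro impI ballI)
      fix x assume "a \<noteq> 0" "x \<in> E" "lm x = 0"
      then have "\<forall>b\<in>B. b x = 0" using Bc unfolding Za_def by blast
      then show "?g x = 0" by (intro sum.neutral) simp
    qed
  qed
qed

lemma basis:
  assumes X: "finite X" "X \<subseteq> E" and nd: "\<And>x y. x \<in> X \<Longrightarrow> y \<in> X \<Longrightarrow> x \<noteq> y \<Longrightarrow> \<not> V x y"
    and c: "\<And>x. x \<in> X \<Longrightarrow> cond a x"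
  shows "beta a ` X \<subseteq> eig (\<i> * of_real a)" "lin_indep (beta a ` X)" "card (beta a ` X) = card X"
    "(\<forall>y\<in>E. cond a y \<longrightarrow> (\<exists>x\<in>X. V x y)) \<Longrightarrow> lin_span (beta a ` X) = eig (\<i> * of_real a)"
proof -
  show sub: "beta a ` X \<subseteq> eig (\<i> * of_real a)" using beta_eig X c by auto
  have delta: "beta a x x0 = (if x = x0 then 1 else 0)" if "x \<in> X" "x0 \<in> X" for x x0
    using beta_self beta_nV nd that X by auto
  have inj: "inj_on (beta a) X"
  proof (rule inj_onI)
    fix x y assume "x \<in> X" "y \<in> X" "beta a x = beta a y"
    then have xy: "x \<in> X" "y \<in> X" "beta a x = beta a y" by auto
    show "x = y"
    proof (rule ccontr)
      assume ne: "x \<noteq> y"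
      have "beta a x x = 1" using delta[OF xy(1) xy(1)] by simp
      moreover have "beta a y x = 0" using delta[OF xy(2) xy(1)] ne by simp
      ultimately show False using xy(3) by simp
    qed
  qed
  show "card (beta a ` X) = card X" using card_image[OF inj] .
  have sumX: "(\<Sum>b\<in>beta a ` X. h b * b y) = (\<Sum>x\<in>X. h (beta a x) * beta a x y)" for h y
    using sum.reindex[OF inj] by simp
  show "lin_indep (beta a ` X)" unfolding lin_indep_def
  proof (intro conjI allI impI ballI)
    show "finite (beta a ` X)" using X by simp
    fix cf b assume z: "\<forall>y. (\<Sum>b\<in>beta a ` X. cf b * b y) = 0" and b: "b \<in> beta a ` X"
    then obtain x0 where x0: "x0 \<in> X" "b = beta a x0" by auto
    have z0: "(\<Sum>b\<in>beta a ` X. cf b * b x0) = 0" using z by blast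
    have "0 = (\<Sum>x\<in>X. cf (beta a x) * beta a x x0)" using z0 sumX[of cf x0] by simp
    also have "\<dots> = (\<Sum>x\<in>X. if x = x0 then cf (beta a x) else 0)"
      using delta x0 by (intro sum.cong) auto
    also have "\<dots> = cf b" using x0 X by (simp add: sum.delta')
    finally show "cf b = 0" by simp
  qed
  assume cover: "\<forall>y\<in>E. cond a y \<longrightarrow> (\<exists>x\<in>X. V x y)"
  show "lin_span (beta a ` X) = eig (\<i> * of_real a)"
  proof
    show "lin_span (beta a ` X) \<subseteq> eig (\<i> * of_real a)"
    proof
      fix g assume "g \<in> lin_span (beta a ` X)"
      then obtain cf where g: "g = (\<lambda>x. \<Sum>b\<in>beta a ` X. cf b * b x)" unfolding lin_span_def by blast
      have "finite (beta a ` X)" using X by simp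
      from eig_lin[OF this sub, of cf] show "g \<in> eig (\<i> * of_real a)" unfolding g .
    qed
  next
    show "eig (\<i> * of_real a) \<subseteq> lin_span (beta a ` X)"
    proof
      fix f assume f: "f \<in> eig (\<i> * of_real a)"
      have fc: "f \<in> FE E" "Pa a f" "Qa a f" "Za a f" using f eig_char by auto
      define cf where "cf b = f (inv_into X (beta a) b)" for b
      have cfx: "cf (beta a x) = f x" if "x \<in> X" for x
        unfolding cf_def using inv_into_f_f[OF inj that] by simp
      have "f y = (\<Sum>b\<in>beta a ` X. cf b * b y)" for y
      proof -
        have s: "(\<Sum>b\<in>beta a ` X. cf b * b y) = (\<Sum>x\<in>X. f x * beta a x y)"
          unfolding sumX[of cf y] by (rule sum.cong) (simp_all add: cfx)
        show ?thesis
        proof (cases "y \<in> E \<and> cond a y")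
          case True
          then obtain x where x: "x \<in> X" "V x y" using cover by blast
          have "(\<Sum>x'\<in>X. f x' * beta a x' y) = (\<Sum>x'\<in>X. if x' = x then f x * beta a x y else 0)"
          proof (rule sum.cong)
            fix x' assume x': "x' \<in> X"
            show "f x' * beta a x' y = (if x' = x then f x * beta a x y else 0)"
            proof (cases "x' = x")
              case False
              have "\<not> V x' y" using nd[OF x' x(1) False] vsim_trans[OF vp _ vsim_sym[OF vp x(2)]] by blast
              then show ?thesis using False beta_nV by simp
            qed simp
          qed simp
          also have "\<dots> = f x * beta a x y" using x X by (simp add: sum.delta')
          also have "\<dots> = f y"
          proof -
            have "x \<in> E" using x X by auto
            then have "f y = f x * ea a (Dl x y)" using fc(2) x(2) True unfolding Pa_def by blast
            then show ?thesis unfolding beta_def using x(2) by simp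
          qed
          finally show ?thesis using s by simp
        next
          case False
          have b0: "beta a x y = 0" if "x \<in> X" for x
          proof (rule beta_nV, rule notI)
            assume V: "V x y"
            then have "y \<in> E" using vsim_E[OF vp] by blast
            moreover have "lm y = lm x" using lam_cls[OF V] by simp
            ultimately show False using False c[OF that] unfolding cond_def by auto
          qed
          have fy: "f y = 0"
          proof (cases "y \<in> E")
            case False then show ?thesis using fc(1) unfolding FE_def by simp
          next
            case True
            then have nc: "\<not> cond a y" using False by simp
            then have a0: "a \<noteq> 0" unfolding cond_def by simp
            show ?thesis
            proof (cases "lm y > 0")
              case True then show ?thesis using fc(3) nc \<open>y \<in> E\<close> unfolding Qa_def cond_def by auto
            next
              case False
              then have "lm y = 0" using lam_bnd \<open>y \<in> E\<close> by force
              then show ?thesis using fc(4) a0 \<open>y \<in> E\<close> unfolding Za_def by simp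
            qed
          qed
          show ?thesis using s b0 fy by simp
        qed
      qed
      then have "f = (\<lambda>y. \<Sum>b\<in>beta a ` X. cf b * b y)" by blast
      then show "f \<in> lin_span (beta a ` X)" unfolding lin_span_def by blast
    qed
  qed
qed

end


context P55 begin

lemma cform: "2 * complex_of_real pi * \<i> * of_int m / complex_of_real L = \<i> * of_real (2 * pi * of_int m / L)"
  by (simp add: field_simps)

lemma eig0: "eig 0 = eig (\<i> * of_real 0)" by simp

lemma cl2: "eig 0 = {f \<in> FE E. \<forall>x\<in>E. \<forall>y\<in>E. V x y \<longrightarrow> f x = f y}"
proof -
  have "eig (\<i> * of_real 0) = {f \<in> FE E. Pa 0 f \<and> Qa 0 f \<and> Za (0::real) f}" by (rule eig_char)
  then have "eig 0 = {f \<in> FE E. Pa 0 f \<and> Qa 0 f \<and> Za (0::real) f}" by simp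
  also have "\<dots> = {f \<in> FE E. \<forall>x\<in>E. \<forall>y\<in>E. V x y \<longrightarrow> f x = f y}"
  proof -
    have pa: "Pa 0 f \<longleftrightarrow> (\<forall>x\<in>E. \<forall>y\<in>E. V x y \<longrightarrow> f x = f y)" for f
    proof -
      have "Pa 0 f \<longleftrightarrow> (\<forall>x\<in>E. \<forall>y\<in>E. V x y \<longrightarrow> f y = f x)" unfolding Pa_def by simp
      also have "\<dots> \<longleftrightarrow> (\<forall>x\<in>E. \<forall>y\<in>E. V x y \<longrightarrow> f x = f y)" by (simp add: eq_commute)
      finally show ?thesis .
    qed
    have qa: "Qa 0 f" for f :: "'a \<Rightarrow> complex" unfolding Qa_def by simp
    have za: "Za (0::real) f" for f :: "'a \<Rightarrow> complex" unfolding Za_def by simp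
    show ?thesis using pa qa za by simp
  qed
  finally show ?thesis .
qed

lemma cl1: "{b. is_eigenvalue E Ehat dhat S b} =
       {0} \<union> {2 * of_real pi * \<i> * of_int m / of_real (lk k) | m k.
                 m \<noteq> 0 \<and> k \<ge> 1 \<and> lk k > 0}"
proof
  show "{b. is_eigenvalue E Ehat dhat S b} \<subseteq> {0} \<union> {2 * of_real pi * \<i> * of_int m / of_real (lk k) | m k.
                 m \<noteq> 0 \<and> k \<ge> 1 \<and> lk k > 0}"
  proof
    fix b assume "b \<in> {b. is_eigenvalue E Ehat dhat S b}"
    then obtain f x where f: "f \<in> eig b" and x: "x \<in> E" and fx: "f x \<noteq> 0"
      unfolding is_eigenvalue_def by blast
    show "b \<in> {0} \<union> {2 * of_real pi * \<i> * of_int m / of_real (lk k) | m k.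
                 m \<noteq> 0 \<and> k \<ge> 1 \<and> lk k > 0}"
    proof (cases "b = 0")
      case True then show ?thesis by simp
    next
      case False
      have "lm x \<noteq> 0" using eig_fixed[OF f x] False fx by auto
      then have L: "lm x > 0" using lam_bnd x by force
      have "exp (b * of_real (lm x)) = 1" using eig_per[OF f x L] fx by simp
      then obtain n :: int where n: "Re (b * of_real (lm x)) = 0" "Im (b * of_real (lm x)) = of_int (2 * n) * pi"
        unfolding exp_eq_1 by blast
      have reb: "Re b = 0" using n(1) L by simp
      have imb: "Im b = 2 * pi * of_int n / lm x" using n(2) L by (simp add: field_simps)
      have n0: "n \<noteq> 0" using False reb imb by (simp add: complex_eq_iff)
      have xh: "x \<in> Ehat" using x E_sub by auto
      obtain k where k: "k \<in> cK" "R (cc k) x" "lh x = lk k" using circle_of[OF xh] lh_E[OF x] L by auto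
      have lk: "lk k = lm x" using k lh_E[OF x] by simp
      have "b = 2 * of_real pi * \<i> * of_int n / of_real (lk k)"
        unfolding cform lk using reb imb by (simp add: complex_eq_iff)
      then show ?thesis using k(1) n0 unfolding cK_def by blast
    qed
  qed
next
  show "{0} \<union> {2 * of_real pi * \<i> * of_int m / of_real (lk k) | m k.
                 m \<noteq> 0 \<and> k \<ge> 1 \<and> lk k > 0} \<subseteq> {b. is_eigenvalue E Ehat dhat S b}"
  proof
    fix b assume b: "b \<in> {0} \<union> {2 * of_real pi * \<i> * of_int m / of_real (lk k) | m k.
                 m \<noteq> 0 \<and> k \<ge> 1 \<and> lk k > 0}"
    show "b \<in> {b. is_eigenvalue E Ehat dhat S b}"
    proof (cases "b = 0")
      case True
      define f where "f x = (if x \<in> E then 1 else (0::complex))" for x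
      have "f \<in> eig 0" unfolding cl2 f_def FE_def by simp
      moreover obtain x where x: "x \<in> E" using E(2) by (metis finite.emptyI ex_in_conv)
      moreover have "f x \<noteq> 0" using x unfolding f_def by simp
      ultimately have "is_eigenvalue E Ehat dhat S 0" unfolding is_eigenvalue_def by blast
      then show ?thesis using True by simp
    next
      case False
      then obtain m k where mk: "b = 2 * of_real pi * \<i> * of_int m / of_real (lk k)"
        "m \<noteq> 0" "k \<ge> 1" "lk k > 0" using b by blast
      have k: "k \<in> cK" using mk unfolding cK_def by simp
      define L where "L = lk k"
      define a where "a = 2 * pi * of_int m / L"
      have L0: "L > 0" using mk L_def by simp
      have a0: "a \<noteq> 0" using mk L0 a_def by simp
      have ba: "b = \<i> * of_real a" using mk(1) cform a_def L_def by simp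
      have "L = of_int m * (2 * pi / a)" using L0 mk(2) unfolding a_def by (simp add: field_simps)
      then have ea: "ea a L = 1" using mult_iff[OF a0] by blast
      have x0: "rep k \<in> E" "lm (rep k) = L" using rep_props[OF k] L_def by auto
      have c: "cond a (rep k)" unfolding cond_def using x0 L0 ea by simp
      have "beta a (rep k) \<in> eig b" using beta_eig[OF x0(1) c] ba by simp
      moreover have "beta a (rep k) (rep k) \<noteq> 0" using beta_self[OF x0(1)] by simp
      ultimately show ?thesis unfolding is_eigenvalue_def using x0(1) by blast
    qed
  qed
qed

lemma cl3:
  assumes a: "a \<noteq> 0"
  shows "eig (\<i> * of_real a) =
       {f \<in> FE E.
          (\<forall>x\<in>E. (lm x = 0 \<or> \<not> (\<exists>n::int. lm x = of_int n * (2 * pi / a))) \<longrightarrow> f x = 0) \<and>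
          (\<forall>x\<in>E. lm x \<noteq> 0 \<and> (\<exists>n::int. lm x = of_int n * (2 * pi / a)) \<longrightarrow>
             (\<exists>c. \<forall>y\<in>E. V x y \<longrightarrow> f y = c * exp (\<i> * of_real (a * Dl x y))))}"
  (is "_ = ?T")
proof -
  have mi: "(\<exists>n::int. lm x = of_int n * (2 * pi / a)) \<longleftrightarrow> ea a (lm x) = 1" for x
    using mult_iff[OF a] .
  have "{f \<in> FE E. Pa a f \<and> Qa a f \<and> Za a f} = ?T"
  proof (intro set_eqI iffI)
    fix f assume "f \<in> {f \<in> FE E. Pa a f \<and> Qa a f \<and> Za a f}"
    then have f: "f \<in> FE E" "Pa a f" "Qa a f" "Za a f" by auto
    have z: "f x = 0" if x: "x \<in> E" and h: "lm x = 0 \<or> \<not> ea a (lm x) = 1" for x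
    proof (cases "lm x = 0")
      case True then show ?thesis using f(4) a x unfolding Za_def by simp
    next
      case False
      then have "lm x > 0" using lam_bnd x by force
      then show ?thesis using f(3) x h False unfolding Qa_def by auto
    qed
    show "f \<in> ?T"
      unfolding mi
    proof (intro CollectI conjI ballI impI)
      show "f \<in> FE E" by (fact f(1))
      fix x assume "x \<in> E" "lm x = 0 \<or> \<not> ea a (lm x) = 1"
      then show "f x = 0" using z by blast
    next
      fix x assume x: "x \<in> E"
      show "\<exists>c. \<forall>y\<in>E. V x y \<longrightarrow> f y = c * ea a (Dl x y)"
        using f(2) x unfolding Pa_def by (intro exI[of _ "f x"]) blast
    qed
  next
    fix f assume "f \<in> ?T"
    then have f: "f \<in> FE E" and z: "\<And>x. x \<in> E \<Longrightarrow> lm x = 0 \<or> \<not> ea a (lm x) = 1 \<Longrightarrow> f x = 0"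
      and c: "\<And>x. x \<in> E \<Longrightarrow> lm x \<noteq> 0 \<and> ea a (lm x) = 1 \<Longrightarrow>
             (\<exists>c. \<forall>y\<in>E. V x y \<longrightarrow> f y = c * ea a (Dl x y))"
      unfolding mi by blast+
    have P: "Pa a f" unfolding Pa_def
    proof (intro ballI impI)
      fix x y assume x: "x \<in> E" and y: "y \<in> E" and V: "V x y"
      show "f y = f x * ea a (Dl x y)"
      proof (cases "lm x \<noteq> 0 \<and> ea a (lm x) = 1")
        case True
        then obtain c0 where c0: "\<forall>y\<in>E. V x y \<longrightarrow> f y = c0 * ea a (Dl x y)" using c x by blast
        have "f x = c0" using c0 x vsim_refl[OF vp x] Delta_self by simp
        then show ?thesis using c0 y V by simp
      next
        case False
        have "lm y = lm x" using lam_cls[OF V] by simp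
        then have "f y = 0" "f x = 0" using z x y False by auto
        then show ?thesis by simp
      qed
    qed
    have Q: "Qa a f" unfolding Qa_def using z by fastforce
    have Z: "Za a f" unfolding Za_def using z by blast
    show "f \<in> {f \<in> FE E. Pa a f \<and> Qa a f \<and> Za a f}" using f P Q Z by simp
  qed
  then show ?thesis using eig_char by simp
qed

lemma no_fixed:
  assumes s: "(\<lambda>k. lk (Suc k)) sums 1" and y: "y \<in> E" shows "lm y > 0"
proof -
  have "{x\<in>Ehat. lh x = 0} = {}" using cls5 s by blast
  then have "lh y \<noteq> 0" using y E_sub by auto
  then show ?thesis using lh_E[OF y] lam_bnd[OF y] by simp
qed

lemma rep_X:
  assumes F: "F \<subseteq> cK" "finite F"
  shows "finite (rep ` F)" "rep ` F \<subseteq> E" "card (rep ` F) = card F"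
    "\<forall>x\<in>rep ` F. \<forall>y\<in>rep ` F. x \<noteq> y \<longrightarrow> \<not> V x y"
proof -
  show "finite (rep ` F)" using F by simp
  show "rep ` F \<subseteq> E" using rep_props(1) F by auto
  show "card (rep ` F) = card F" using card_image[OF inj_on_subset[OF rep_inj F(1)]] .
  show "\<forall>x\<in>rep ` F. \<forall>y\<in>rep ` F. x \<noteq> y \<longrightarrow> \<not> V x y"
  proof (intro ballI impI)
    fix x y assume "x \<in> rep ` F" "y \<in> rep ` F" "x \<noteq> y"
    then obtain k k' where "k \<in> F" "k' \<in> F" "x = rep k" "y = rep k'" "k \<noteq> k'" by auto
    then show "\<not> V x y" using rep_nV F by auto
  qed
qed

lemma basis':
  assumes X: "finite X" "X \<subseteq> E" and nd0: "\<forall>x\<in>X. \<forall>y\<in>X. x \<noteq> y \<longrightarrow> \<not> V x y"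
    and c0: "\<forall>x\<in>X. cond a x"
  shows "beta a ` X \<subseteq> eig (\<i> * of_real a)" "lin_indep (beta a ` X)" "card (beta a ` X) = card X"
    "(\<forall>y\<in>E. cond a y \<longrightarrow> (\<exists>x\<in>X. V x y)) \<Longrightarrow> lin_span (beta a ` X) = eig (\<i> * of_real a)"
proof -
  have nd: "\<And>x y. x \<in> X \<Longrightarrow> y \<in> X \<Longrightarrow> x \<noteq> y \<Longrightarrow> \<not> V x y" using nd0 by blast
  have c: "\<And>x. x \<in> X \<Longrightarrow> cond a x" using c0 by blast
  show "beta a ` X \<subseteq> eig (\<i> * of_real a)" by (rule basis(1)[OF X nd c])
  show "lin_indep (beta a ` X)" by (rule basis(2)[OF X nd c])
  show "card (beta a ` X) = card X" by (rule basis(3)[OF X nd c])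
  show "(\<forall>y\<in>E. cond a y \<longrightarrow> (\<exists>x\<in>X. V x y)) \<Longrightarrow> lin_span (beta a ` X) = eig (\<i> * of_real a)"
    by (rule basis(4)[OF X nd c])
qed

lemma cl4:
  assumes s: "(\<lambda>k. lk (Suc k)) sums 1"
  shows "dim_eq_card (eig 0) {k. k \<ge> 1 \<and> lk k > 0}"
proof -
  have K: "{k. k \<ge> 1 \<and> lk k > 0} = cK" unfolding cK_def by simp
  have c0: "\<forall>x\<in>rep ` cK. cond 0 x" unfolding cond_def by simp
  have c0': "\<forall>x\<in>rep ` F. cond 0 x" for F unfolding cond_def by simp
  have fin: "has_dim (eig 0) (card cK)" if fK: "finite cK"
  proof -
    note X = rep_X[OF subset_refl fK]
    have cover: "\<forall>y\<in>E. cond 0 y \<longrightarrow> (\<exists>x\<in>rep ` cK. V x y)"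
      using rep_cover no_fixed[OF s] by blast
    note bs = basis'[OF X(1,2) X(4) c0]
    show ?thesis unfolding has_dim_def eig0
      using bs(1,2) bs(4)[OF cover] bs(3) X(3) by metis
  qed
  have inf: "infinite_dim (eig 0)" if iK: "infinite cK"
    unfolding infinite_dim_def
  proof
    fix n
    obtain F where F: "F \<subseteq> cK" "finite F" "card F = n" using infinite_arbitrarily_large[OF iK] by blast
    note X = rep_X[OF F(1,2)]
    note bs = basis'[OF X(1,2) X(4) c0']
    show "\<exists>B\<subseteq>eig 0. lin_indep B \<and> card B = n"
      unfolding eig0 using bs(1,2,3) X(3) F(3) by metis
  qed
  show ?thesis unfolding dim_eq_card_def K using fin inf by blast
qed

lemma cl5:
  assumes s: "\<exists>s<1. (\<lambda>k. lk (Suc k)) sums s"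
  shows "infinite_dim (eig 0)"
  unfolding infinite_dim_def
proof
  fix n
  define Z where "Z = {x\<in>Ehat. lh x = 0}"
  have iZ: "infinite Z" using cls4 s Z_def by blast
  obtain F where F: "F \<subseteq> Z" "finite F" "card F = n" using infinite_arbitrarily_large[OF iZ] by blast
  have FE': "F \<subseteq> E" "\<And>x. x \<in> F \<Longrightarrow> lm x = 0" using F(1) lh0 unfolding Z_def by auto
  have nd: "\<forall>x\<in>F. \<forall>y\<in>F. x \<noteq> y \<longrightarrow> \<not> V x y"
    using lam_zero_fixed FE' by (metis subsetD)
  have c0: "\<forall>x\<in>F. cond 0 x" unfolding cond_def by simp
  note bs = basis'[OF F(2) FE'(1) nd c0]
  show "\<exists>B\<subseteq>eig 0. lin_indep B \<and> card B = n"
    unfolding eig0 using bs(1,2,3) F(3) by metis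
qed

lemma cl6:
  assumes a: "a \<noteq> 0"
  shows "let K = {k. k \<ge> 1 \<and> lk k \<noteq> 0 \<and> (\<exists>n::int. lk k = of_int n * (2 * pi / a))}
        in finite K \<and> has_dim (eig (\<i> * of_real a)) (card K)"
proof -
  define K where "K = {k. k \<ge> 1 \<and> lk k \<noteq> 0 \<and> (\<exists>n::int. lk k = of_int n * (2 * pi / a))}"
  have K': "K = {k \<in> cK. ea a (lk k) = 1}"
    unfolding K_def cK_def using lamk_nonneg mult_iff[OF a] by force
  have KcK: "K \<subseteq> cK" unfolding K' by auto
  have lower: "lk k \<ge> 2 * pi / \<bar>a\<bar>" if k: "k \<in> K" for k
  proof -
    obtain n :: int where n: "lk k = of_int n * (2 * pi / a)" "lk k \<noteq> 0" using k unfolding K_def by blast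
    have pos: "lk k > 0" using KcK k unfolding cK_def by auto
    have "n \<noteq> 0" using n by auto
    then have n1: "\<bar>real_of_int n\<bar> \<ge> 1" by linarith
    have "lk k = \<bar>lk k\<bar>" using pos by simp
    also have "\<dots> = \<bar>real_of_int n\<bar> * (2 * pi / \<bar>a\<bar>)" unfolding n(1) by (simp add: abs_mult)
    also have "\<dots> \<ge> 1 * (2 * pi / \<bar>a\<bar>)" using n1 by (intro mult_right_mono) auto
    finally show ?thesis by simp
  qed
  have finK: "finite K"
  proof (rule ccontr)
    assume iK: "infinite K"
    define N where "N = nat \<lceil>\<bar>a\<bar> / (2 * pi)\<rceil> + 1"
    have N: "real N > \<bar>a\<bar> / (2 * pi)" unfolding N_def by linarith
    obtain F where F: "F \<subseteq> K" "finite F" "card F = N" using infinite_arbitrarily_large[OF iK] by blast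
    have FcK: "F \<subseteq> cK" using F KcK by auto
    note X = rep_X[OF FcK F(2)]
    have "(\<Sum>x\<in>rep ` F. lm x) \<le> 1" by (rule density_sum[OF X(1,2)]) (use X(4) in blast)
    moreover have "(\<Sum>x\<in>rep ` F. lm x) = (\<Sum>k\<in>F. lk k)"
      using sum.reindex[OF inj_on_subset[OF rep_inj FcK], of lm] rep_props(3) FcK
      by (simp add: subset_iff)
    moreover have "(\<Sum>k\<in>F. lk k) \<ge> (\<Sum>k\<in>F. 2 * pi / \<bar>a\<bar>)" using lower F(1) by (intro sum_mono) auto
    moreover have "(\<Sum>k\<in>F. 2 * pi / \<bar>a\<bar>) = real N * (2 * pi / \<bar>a\<bar>)" using F(3) by simp
    moreover have "real N * (2 * pi / \<bar>a\<bar>) > 1"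
    proof -
      have "real N * (2 * pi) > \<bar>a\<bar>" using N pi_gt_zero by (simp add: field_simps)
      then show ?thesis using a by (simp add: field_simps)
    qed
    ultimately show False by linarith
  qed
  note X = rep_X[OF KcK finK]
  have c: "\<forall>x\<in>rep ` K. cond a x"
  proof
    fix x assume xK: "x \<in> rep ` K"
    obtain k where k: "k \<in> K" "x = rep k" using xK by blast
    have "lm x = lk k" using rep_props(3) k KcK by auto
    then show "cond a x" unfolding cond_def using k K' cK_def by auto
  qed
  have cover: "\<forall>y\<in>E. cond a y \<longrightarrow> (\<exists>x\<in>rep ` K. V x y)"
  proof (intro ballI impI)
    fix y assume y: "y \<in> E" and cy: "cond a y"
    then have l: "lm y > 0" "ea a (lm y) = 1" using a unfolding cond_def by auto
    obtain k where k: "k \<in> cK" "V (rep k) y" "lk k = lm y" using rep_cover[OF y l(1)] by blast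
    have "k \<in> K" unfolding K' using k l by simp
    then show "\<exists>x\<in>rep ` K. V x y" using k by blast
  qed
  note bs = basis'[OF X(1,2) X(4) c]
  have "has_dim (eig (\<i> * of_real a)) (card K)"
    unfolding has_dim_def using bs(1,2) bs(4)[OF cover] bs(3) X(3) by metis
  then show ?thesis using finK unfolding K_def Let_def by simp
qed

end


theorem proposition5p5:
  fixes E :: "'a set" and enum :: "nat \<Rightarrow> 'a" and \<sigma> :: "'a set \<Rightarrow> 'a \<Rightarrow> 'a"
    and Ehat :: "'a set" and dhat :: "'a \<Rightarrow> 'a \<Rightarrow> real" and S :: "real \<Rightarrow> 'a \<Rightarrow> 'a"
  assumes E: "countable E" "infinite E" "bij_betw enum UNIV E"
    and vp: "virtual_perm E \<sigma>"
    and lam_conv: "\<forall>x\<in>E. convergent (lam_seq E enum \<sigma> x)"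
    and Delta_conv: "\<forall>x y. vsim E \<sigma> x y \<longrightarrow> convergent (Delta_seq enum \<sigma> x y)"
    and lam_pos: "\<forall>x\<in>E. lam E enum \<sigma> x > 0 \<longleftrightarrow> \<not> vfixed E \<sigma> x"
    and compl: "is_completion E (vdist E enum \<sigma>) Ehat dhat"
    and ext: "extensions_exist E enum \<sigma> Ehat dhat"
    and cls: "class_structure E enum \<sigma> Ehat dhat"
    and flow: "is_flow E enum \<sigma> Ehat dhat S"
  shows
    "({b. is_eigenvalue E Ehat dhat S b} =
       {0} \<union> {2 * of_real pi * \<i> * of_int m / of_real (lamk E enum \<sigma> k) | m k.
                 m \<noteq> 0 \<and> k \<ge> 1 \<and> lamk E enum \<sigma> k > 0}) \<and>
    (eigenspace E Ehat dhat S 0 =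
       {f \<in> FE E. \<forall>x\<in>E. \<forall>y\<in>E. vsim E \<sigma> x y \<longrightarrow> f x = f y}) \<and>
    (\<forall>a::real. a \<noteq> 0 \<longrightarrow>
       eigenspace E Ehat dhat S (\<i> * of_real a) =
       {f \<in> FE E.
          (\<forall>x\<in>E. (lam E enum \<sigma> x = 0 \<or> \<not> (\<exists>n::int. lam E enum \<sigma> x = of_int n * (2 * pi / a)))
                    \<longrightarrow> f x = 0) \<and>
          (\<forall>x\<in>E. lam E enum \<sigma> x \<noteq> 0 \<and> (\<exists>n::int. lam E enum \<sigma> x = of_int n * (2 * pi / a)) \<longrightarrow>
             (\<exists>c. \<forall>y\<in>E. vsim E \<sigma> x y \<longrightarrow>
                   f y = c * exp (\<i> * of_real (a * Delta enum \<sigma> x y))))}) \<and>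
    ((\<lambda>k. lamk E enum \<sigma> (Suc k)) sums 1 \<longrightarrow>
       dim_eq_card (eigenspace E Ehat dhat S 0) {k. k \<ge> 1 \<and> lamk E enum \<sigma> k > 0}) \<and>
    ((\<exists>s<1. (\<lambda>k. lamk E enum \<sigma> (Suc k)) sums s) \<longrightarrow>
       infinite_dim (eigenspace E Ehat dhat S 0)) \<and>
    (\<forall>a::real. a \<noteq> 0 \<longrightarrow>
       (let K = {k. k \<ge> 1 \<and> lamk E enum \<sigma> k \<noteq> 0 \<and>
                    (\<exists>n::int. lamk E enum \<sigma> k = of_int n * (2 * pi / a))}
        in finite K \<and> has_dim (eigenspace E Ehat dhat S (\<i> * of_real a)) (card K)))"
proof -
  interpret P55 E enum \<sigma> Ehat dhat S
    using E vp lam_conv Delta_conv lam_pos compl ext cls flow by (simp add: P55_def)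
  show ?thesis
  proof (intro conjI allI impI)
    show "{b. is_eigenvalue E Ehat dhat S b} =
       {0} \<union> {2 * of_real pi * \<i> * of_int m / of_real (lamk E enum \<sigma> k) | m k.
                 m \<noteq> 0 \<and> k \<ge> 1 \<and> lamk E enum \<sigma> k > 0}" by (rule cl1)
    show "eigenspace E Ehat dhat S 0 =
       {f \<in> FE E. \<forall>x\<in>E. \<forall>y\<in>E. vsim E \<sigma> x y \<longrightarrow> f x = f y}" by (rule cl2)
  next
    fix a :: real assume "a \<noteq> 0"
    then show "eigenspace E Ehat dhat S (\<i> * of_real a) =
       {f \<in> FE E.
          (\<forall>x\<in>E. (lam E enum \<sigma> x = 0 \<or> \<not> (\<exists>n::int. lam E enum \<sigma> x = of_int n * (2 * pi / a)))
                    \<longrightarrow> f x = 0) \<and>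
          (\<forall>x\<in>E. lam E enum \<sigma> x \<noteq> 0 \<and> (\<exists>n::int. lam E enum \<sigma> x = of_int n * (2 * pi / a)) \<longrightarrow>
             (\<exists>c. \<forall>y\<in>E. vsim E \<sigma> x y \<longrightarrow>
                   f y = c * exp (\<i> * of_real (a * Delta enum \<sigma> x y))))}" by (rule cl3)
  next
    assume "(\<lambda>k. lamk E enum \<sigma> (Suc k)) sums 1"
    then show "dim_eq_card (eigenspace E Ehat dhat S 0) {k. k \<ge> 1 \<and> lamk E enum \<sigma> k > 0}" by (rule cl4)
  next
    assume "\<exists>s<1. (\<lambda>k. lamk E enum \<sigma> (Suc k)) sums s"
    then show "infinite_dim (eigenspace E Ehat dhat S 0)" by (rule cl5)
  next
    fix a :: real assume "a \<noteq> 0"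
    then show "let K = {k. k \<ge> 1 \<and> lamk E enum \<sigma> k \<noteq> 0 \<and>
                    (\<exists>n::int. lamk E enum \<sigma> k = of_int n * (2 * pi / a))}
        in finite K \<and> has_dim (eigenspace E Ehat dhat S (\<i> * of_real a)) (card K)" by (rule cl6)
  qed
qed

end
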